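(* Let $\rho>0$, $b>\frac12$, $b'<-\frac14$ and $s\ge3b$. Let $p\in\mathbb{N}$ and let $u_1,\dots,u_{p+1},v_1,\dots,v_{p+1}\in X_{\rho,s,b}$. Then there are constants $C,c$ such that $$\Big\|\partial_x\Big(\prod_{i=1}^pu_i\prod_{j=1}^{p+1}v_j\Big)\Big\|_{X_{\rho,s,b'}}\le C\prod_{i=1}^p\|u_i\|_{X_{s,b}}\prod_{j=1}^{p+1}\|v_j\|_{X_{s,b}}+c\prod_{i=1}^p\|u_i\|_{X_{\rho,s,b}}\prod_{j=1}^{p+1}\|v_j\|_{X_{\rho,s,b}},$$ $$\Big\|\partial_x\Big(\prod_{i=1}^{p+1}u_i\prod_{j=1}^{p}v_j\Big)\Big\|_{X_{\rho,s,b'}}\le C\prod_{i=1}^{p+1}\|u_i\|_{X_{s,b}}\prod_{j=1}^{p}\|v_j\|_{X_{s,b}}+c\prod_{i=1}^{p+1}\|u_i\|_{X_{\rho,s,b}}\prod_{j=1}^{p}\|v_j\|_{X_{\rho,s,b}}.$$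
   Context: For a function $u(x,t)$, $\widehat{u}(\zeta,\eta)$ denotes its space-time Fourier transform. For $\rho\ge0$, $s,b\in\mathbb{R}$, $\|u\|_{X_{\rho,s,b}}=\big\|e^{\rho(1+|\zeta|)}(1+|\zeta|)^s(1+|\eta-\zeta^3|)^b\widehat{u}(\zeta,\eta)\big\|_{L^2_{\zeta,\eta}}$, and $X_{s,b}=X_{0,s,b}$ is the classical Bourgain space with norm $\|u\|_{X_{s,b}}=\big\|(1+|\zeta|)^s(1+|\eta-\zeta^3|)^b\widehat{u}(\zeta,\eta)\big\|_{L^2_{\zeta,\eta}}$. *)

theory Defs
  imports "HOL-Analysis.Analysis"
begin

(* Everything is expressed on the Fourier side: a space-time function u(x,t)
   is represented by its space-time Fourier transform
     uh(zeta,eta) = \<integral>\<integral> exp(-i(x zeta + t eta)) u(x,t) dx dt,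
   a function  real \<times> real \<Rightarrow> complex  of (zeta, eta). *)

definition bweight :: "real \<Rightarrow> real \<Rightarrow> real \<Rightarrow> real \<times> real \<Rightarrow> real" where
  "bweight \<rho> s b z =
     exp (\<rho> * (1 + \<bar>fst z\<bar>)) * (1 + \<bar>fst z\<bar>) powr s * (1 + \<bar>snd z - fst z ^ 3\<bar>) powr b"

definition ennsqrt :: "ennreal \<Rightarrow> ennreal" where
  "ennsqrt x = (if x = top then top else ennreal (sqrt (enn2real x)))"

text \<open>Norm of X_{rho,s,b}, given the Fourier transform uh of u (possibly infinite).
  X_{s,b} is the case rho = 0.\<close>
definition Xnorm :: "real \<Rightarrow> real \<Rightarrow> real \<Rightarrow> (real \<times> real \<Rightarrow> complex) \<Rightarrow> ennreal" where
  "Xnorm \<rho> s b uh = ennsqrt (\<integral>\<^sup>+ z. ennreal ((bweight \<rho> s b z * cmod (uh z))\<^sup>2) \<partial>lborel)"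

definition inX :: "real \<Rightarrow> real \<Rightarrow> real \<Rightarrow> (real \<times> real \<Rightarrow> complex) \<Rightarrow> bool" where
  "inX \<rho> s b uh \<longleftrightarrow> uh \<in> borel_measurable lborel \<and> Xnorm \<rho> s b uh < top"

text \<open>Fourier transform of a product:  (u v)^ = (2 pi)^(-2) (uh * vh).\<close>
definition fconv :: "(real \<times> real \<Rightarrow> complex) \<Rightarrow> (real \<times> real \<Rightarrow> complex) \<Rightarrow> real \<times> real \<Rightarrow> complex" where
  "fconv f g = (\<lambda>z. complex_of_real (1 / (2 * pi)\<^sup>2) * (LINT w|lborel. f w * g (z - w)))"

fun fprod :: "(real \<times> real \<Rightarrow> complex) list \<Rightarrow> real \<times> real \<Rightarrow> complex" where
  "fprod [] = (\<lambda>_. 0)"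
| "fprod [f] = f"
| "fprod (f # fs) = fconv f (fprod fs)"

text \<open>Fourier transform of the x-derivative: (d_x u)^ = i zeta uh.\<close>
definition dx_hat :: "(real \<times> real \<Rightarrow> complex) \<Rightarrow> real \<times> real \<Rightarrow> complex" where
  "dx_hat f = (\<lambda>z. \<i> * complex_of_real (fst z) * f z)"

end

theory Submission
  imports Defs "HOL-Real_Asymp.Real_Asymp"
begin


type_synonym pt = "real \<times> real"

lemma sets_lborel_pt: "sets (lborel :: pt measure) = sets borel" by simp

lemma pt_shift:
  fixes f :: "pt \<Rightarrow> ennreal" and c :: pt
  assumes [measurable]: "f \<in> borel_measurable borel"
  shows "(\<integral>\<^sup>+w. f (c + w) \<partial>lborel) = (\<integral>\<^sup>+w. f w \<partial>lborel)"
proof -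
  have "(\<integral>\<^sup>+w. f w \<partial>lborel) = (\<integral>\<^sup>+w. f w \<partial>(distr lborel borel ((+) c)))"
    by (simp add: lborel_distr_plus)
  also have "\<dots> = (\<integral>\<^sup>+w. f (c + w) \<partial>lborel)"
    by (subst nn_integral_distr) auto
  finally show ?thesis by simp
qed

lemma pt_refl:
  fixes f :: "pt \<Rightarrow> ennreal" and c :: pt
  assumes [measurable]: "f \<in> borel_measurable borel"
  shows "(\<integral>\<^sup>+w. f (c - w) \<partial>lborel) = (\<integral>\<^sup>+w. f w \<partial>lborel)"
proof -
  have e: "(lborel::pt measure) = distr lborel borel (\<lambda>x. c + (-1) *\<^sub>R x)"
    using lborel_affine[of "-1::real" c] by (simp add: density_1)
  have "(\<integral>\<^sup>+w. f w \<partial>lborel) = (\<integral>\<^sup>+w. f w \<partial>(distr lborel borel (\<lambda>x. c + (-1) *\<^sub>R x)))"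
    by (subst e) simp
  also have "\<dots> = (\<integral>\<^sup>+w. f (c - w) \<partial>lborel)"
    by (subst nn_integral_distr) auto
  finally show ?thesis by simp
qed

lemma pt_split:
  fixes f :: "pt \<Rightarrow> ennreal"
  assumes [measurable]: "f \<in> borel_measurable borel"
  shows "(\<integral>\<^sup>+w. f w \<partial>lborel) = (\<integral>\<^sup>+y. \<integral>\<^sup>+x. f (x,y) \<partial>lborel \<partial>lborel)"
proof -
  have m: "f \<in> borel_measurable (lborel \<Otimes>\<^sub>M lborel)"
    by (simp add: lborel_prod)
  show ?thesis using lborel_pair.nn_integral_snd[OF m] by (simp add: lborel_prod)
qed

definition cv :: "(pt \<Rightarrow> ennreal) \<Rightarrow> (pt \<Rightarrow> ennreal) \<Rightarrow> pt \<Rightarrow> ennreal" where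
  "cv F G z = (\<integral>\<^sup>+w. F w * G (z - w) \<partial>lborel)"

lemma meas2:
  fixes F G :: "pt \<Rightarrow> ennreal"
  assumes [measurable]: "F \<in> borel_measurable borel" "G \<in> borel_measurable borel"
  shows "(\<lambda>(z,w). F w * G (z - w)) \<in> borel_measurable (lborel \<Otimes>\<^sub>M lborel)"
  by measurable

lemma cv_meas[measurable]:
  fixes F G :: "pt \<Rightarrow> ennreal"
  assumes [measurable]: "F \<in> borel_measurable borel" "G \<in> borel_measurable borel"
  shows "cv F G \<in> borel_measurable borel"
proof -
  have "(\<lambda>z. \<integral>\<^sup>+w. F w * G (z - w) \<partial>lborel) \<in> borel_measurable lborel"
    using meas2[OF assms] by measurable
  then show ?thesis unfolding cv_def[abs_def] by simp
qed

lemma cv_comm: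
  fixes F G :: "pt \<Rightarrow> ennreal"
  assumes [measurable]: "F \<in> borel_measurable borel" "G \<in> borel_measurable borel"
  shows "cv F G z = cv G F z"
proof -
  have "cv G F z = (\<integral>\<^sup>+w. (\<lambda>w. F w * G (z - w)) (z - w) \<partial>lborel)"
    unfolding cv_def by (simp add: mult.commute)
  also have "\<dots> = cv F G z" unfolding cv_def by (rule pt_refl) measurable
  finally show ?thesis by simp
qed

lemma cv_integral:
  fixes F G :: "pt \<Rightarrow> ennreal"
  assumes [measurable]: "F \<in> borel_measurable borel" "G \<in> borel_measurable borel"
  shows "(\<integral>\<^sup>+z. cv F G z \<partial>lborel) = (\<integral>\<^sup>+w. F w \<partial>lborel) * (\<integral>\<^sup>+w. G w \<partial>lborel)"
proof -
  have "(\<integral>\<^sup>+z. cv F G z \<partial>lborel) = (\<integral>\<^sup>+z. \<integral>\<^sup>+w. F w * G (z - w) \<partial>lborel \<partial>lborel)"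
    unfolding cv_def ..
  also have "\<dots> = (\<integral>\<^sup>+w. \<integral>\<^sup>+z. F w * G (z - w) \<partial>lborel \<partial>lborel)"
    by (rule lborel_pair.Fubini'[symmetric]) measurable
  also have "\<dots> = (\<integral>\<^sup>+w. F w * (\<integral>\<^sup>+z. G (z - w) \<partial>lborel) \<partial>lborel)"
    by (rule nn_integral_cong) (simp add: nn_integral_cmult)
  also have "\<dots> = (\<integral>\<^sup>+w. F w * (\<integral>\<^sup>+z. G z \<partial>lborel) \<partial>lborel)"
  proof (rule nn_integral_cong)
    fix w :: pt
    have "(\<integral>\<^sup>+z. G (z - w) \<partial>lborel) = (\<integral>\<^sup>+z. G (- w + z) \<partial>lborel)" by simp
    also have "\<dots> = (\<integral>\<^sup>+z. G z \<partial>lborel)" by (rule pt_shift) measurable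
    finally show "F w * (\<integral>\<^sup>+z. G (z - w) \<partial>lborel) = F w * (\<integral>\<^sup>+z. G z \<partial>lborel)" by simp
  qed
  also have "\<dots> = (\<integral>\<^sup>+w. F w \<partial>lborel) * (\<integral>\<^sup>+w. G w \<partial>lborel)"
    by (simp add: nn_integral_multc)
  finally show ?thesis .
qed

lemma cv_assoc:
  fixes F G H :: "pt \<Rightarrow> ennreal"
  assumes [measurable]: "F \<in> borel_measurable borel" "G \<in> borel_measurable borel"
     "H \<in> borel_measurable borel"
  shows "cv F (cv G H) z = cv (cv F G) H z"
proof -
  have "cv F (cv G H) z = (\<integral>\<^sup>+w. F w * (\<integral>\<^sup>+u. G u * H (z - w - u) \<partial>lborel) \<partial>lborel)"
    unfolding cv_def ..
  also have "\<dots> = (\<integral>\<^sup>+w. F w * (\<integral>\<^sup>+v. G (v - w) * H (z - v) \<partial>lborel) \<partial>lborel)"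
  proof (rule nn_integral_cong)
    fix w :: pt
    have "(\<integral>\<^sup>+u. G u * H (z - w - u) \<partial>lborel) = (\<integral>\<^sup>+v. (\<lambda>u. G u * H (z - w - u)) (- w + v) \<partial>lborel)"
      by (rule pt_shift[symmetric]) measurable
    also have "\<dots> = (\<integral>\<^sup>+v. G (v - w) * H (z - v) \<partial>lborel)"
      by (simp add: algebra_simps)
    finally show "F w * (\<integral>\<^sup>+u. G u * H (z - w - u) \<partial>lborel) = F w * (\<integral>\<^sup>+v. G (v - w) * H (z - v) \<partial>lborel)"
      by simp
  qed
  also have "\<dots> = (\<integral>\<^sup>+w. \<integral>\<^sup>+v. F w * G (v - w) * H (z - v) \<partial>lborel \<partial>lborel)"
    by (rule nn_integral_cong) (simp add: nn_integral_cmult[symmetric] mult.assoc)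
  also have "\<dots> = (\<integral>\<^sup>+v. \<integral>\<^sup>+w. F w * G (v - w) * H (z - v) \<partial>lborel \<partial>lborel)"
    by (rule lborel_pair.Fubini') measurable
  also have "\<dots> = (\<integral>\<^sup>+v. cv F G v * H (z - v) \<partial>lborel)"
    unfolding cv_def by (rule nn_integral_cong) (simp add: nn_integral_multc)
  also have "\<dots> = cv (cv F G) H z" unfolding cv_def ..
  finally show ?thesis .
qed

lemma cv_mono:
  assumes "\<And>z. G z \<le> G' z"
  shows "cv F G z \<le> cv F G' z"
  unfolding cv_def by (intro nn_integral_mono mult_left_mono assms) simp

lemma cv_mono1:
  assumes "\<And>z. F z \<le> F' z"
  shows "cv F G z \<le> cv F' G z"
  unfolding cv_def by (intro nn_integral_mono mult_right_mono assms) simp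

lemma cv_add:
  assumes [measurable]: "F \<in> borel_measurable borel" "A \<in> borel_measurable borel" "B \<in> borel_measurable borel"
  shows "cv F (\<lambda>z. A z + B z) z = cv F A z + cv F B z"
  unfolding cv_def by (simp add: distrib_left nn_integral_add)

lemma cv_cmult:
  assumes [measurable]: "F \<in> borel_measurable borel" "A \<in> borel_measurable borel"
  shows "cv F (\<lambda>z. c * A z) z = c * cv F A z"
  unfolding cv_def by (simp add: nn_integral_cmult[symmetric] mult.left_commute)


definition jb :: "real \<Rightarrow> real" where "jb x = 1 + \<bar>x\<bar>"

lemma jb_pos[simp]: "jb x > 0" and jb_ge1[simp]: "jb x \<ge> 1" and jb_nonneg[simp]: "jb x \<ge> 0"
  by (auto simp: jb_def)

lemma jb_minus[simp]: "jb (- x) = jb x" by (simp add: jb_def)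

lemma jb_meas[measurable]: "jb \<in> borel_measurable borel"
  unfolding jb_def[abs_def] by measurable

definition Ib :: "real \<Rightarrow> ennreal" where
  "Ib a = (\<integral>\<^sup>+x. ennreal (jb x powr (- a)) \<partial>lborel)"

lemma half_line:
  assumes "a > 1"
  shows "(\<integral>\<^sup>+x. ennreal (jb x powr (- a)) * indicator {0..} x \<partial>lborel) = ennreal (1 / (a - 1))"
proof -
  define F where "F x = - ((1 + x) powr (1 - a) / (a - 1))" for x
  have "(\<integral>\<^sup>+x. ennreal ((1 + x) powr (- a)) * indicator {0..} x \<partial>lborel) = 0 - F 0"
  proof (rule nn_integral_FTC_atLeast)
    show "(\<lambda>x::real. (1 + x) powr (- a)) \<in> borel_measurable borel" by measurable
    fix x :: real assume x: "0 \<le> x"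
    have d: "((\<lambda>y. y powr (1 - a)) has_real_derivative (1 - a) * (1 + x) powr (1 - a - 1)) (at (1 + x))"
      by (rule has_real_derivative_powr) (use x in auto)
    have d2: "((\<lambda>x. 1 + x) has_real_derivative 1) (at x)"
      by (auto intro!: derivative_eq_intros)
    have "((\<lambda>x. (1 + x) powr (1 - a)) has_real_derivative (1 - a) * (1 + x) powr (1 - a - 1) * 1) (at x)"
      using DERIV_chain2[OF d d2] .
    then have "((\<lambda>x. (1 + x) powr (1 - a) / (a - 1)) has_real_derivative ((1 - a) * (1 + x) powr (1 - a - 1) * 1) / (a - 1)) (at x)"
      by (rule DERIV_cdivide)
    then have "((\<lambda>x. - ((1 + x) powr (1 - a) / (a - 1))) has_real_derivative - (((1 - a) * (1 + x) powr (1 - a - 1) * 1) / (a - 1))) (at x)"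
      by (rule DERIV_minus)
    moreover have "- (((1 - a) * (1 + x) powr (1 - a - 1) * 1) / (a - 1)) = (1 + x) powr (- a)"
      using assms by (simp add: field_simps)
    ultimately show "DERIV F x :> (1 + x) powr (- a)" unfolding F_def[abs_def] by simp
    show "0 \<le> (1 + x) powr (- a)" by simp
  next
    show "(F \<longlongrightarrow> 0) at_top" unfolding F_def using assms by real_asymp
  qed
  also have "0 - F 0 = 1 / (a - 1)" by (simp add: F_def)
  finally have *: "(\<integral>\<^sup>+x. ennreal ((1 + x) powr (- a)) * indicator {0..} x \<partial>lborel) = ennreal (1 / (a - 1))" .
  show ?thesis
    by (subst *[symmetric], rule nn_integral_cong) (auto simp: jb_def split: split_indicator)
qed

lemma even_int_le:
  fixes f :: "real \<Rightarrow> ennreal"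
  assumes [measurable]: "f \<in> borel_measurable borel" and ev: "\<And>x. f (- x) = f x"
  shows "(\<integral>\<^sup>+x. f x \<partial>lborel) \<le> 2 * (\<integral>\<^sup>+x. f x * indicator {0..} x \<partial>lborel)"
proof -
  have "(\<integral>\<^sup>+x. f x \<partial>lborel) \<le> (\<integral>\<^sup>+x. f x * indicator {0..} x + f x * indicator {..0} x \<partial>lborel)"
    by (intro nn_integral_mono) (auto split: split_indicator)
  also have "\<dots> = (\<integral>\<^sup>+x. f x * indicator {0..} x \<partial>lborel) + (\<integral>\<^sup>+x. f x * indicator {..0} x \<partial>lborel)"
    by (rule nn_integral_add) auto
  also have "(\<integral>\<^sup>+x. f x * indicator {..0} x \<partial>lborel) = (\<integral>\<^sup>+x. f x * indicator {0..} x \<partial>lborel)"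
  proof -
    have "(\<integral>\<^sup>+x. f x * indicator {..0} x \<partial>lborel) = ennreal \<bar>-1\<bar> * (\<integral>\<^sup>+x. f (0 + -1 * x) * indicator {..0} (0 + -1 * x) \<partial>lborel)"
      by (rule nn_integral_real_affine) auto
    also have "\<dots> = (\<integral>\<^sup>+x. f x * indicator {0..} x \<partial>lborel)"
      by (auto simp: ev intro!: nn_integral_cong split: split_indicator)
    finally show ?thesis .
  qed
  finally show ?thesis by (simp add: mult_2)
qed

lemma Ib_fin:
  assumes "a > 1"
  shows "Ib a \<le> ennreal (2 / (a - 1))"
proof -
  have "Ib a \<le> 2 * (\<integral>\<^sup>+x. ennreal (jb x powr (- a)) * indicator {0..} x \<partial>lborel)"
    unfolding Ib_def by (rule even_int_le) auto
  also have "\<dots> = 2 * ennreal (1 / (a - 1))" by (simp add: half_line assms)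
  also have "\<dots> = ennreal (2 / (a - 1))" using assms
    by (simp add: ennreal_mult'[symmetric] ennreal_numeral[symmetric] del: ennreal_numeral)
  finally show ?thesis .
qed

lemma Ib_lt_top: "a > 1 \<Longrightarrow> Ib a < \<infinity>"
  using Ib_fin[of a] by (auto simp: top_unique intro: le_less_trans)

lemma Ib_shift:
  "(\<integral>\<^sup>+x. ennreal (jb (c - x) powr (- a)) \<partial>lborel) = Ib a"
proof -
  have "Ib a = ennreal \<bar>-1\<bar> * (\<integral>\<^sup>+x. ennreal (jb (c + -1 * x) powr (- a)) \<partial>lborel)"
    unfolding Ib_def
    apply (subst nn_integral_real_affine[where c="-1" and t=c]) by auto
  then show ?thesis by simp
qed

lemma Ib_shift2:
  "(\<integral>\<^sup>+x. ennreal (jb (x - c) powr (- a)) \<partial>lborel) = Ib a"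
proof -
  have "(\<integral>\<^sup>+x. ennreal (jb (x - c) powr (- a)) \<partial>lborel) = (\<integral>\<^sup>+x. ennreal (jb (c - x) powr (- a)) \<partial>lborel)"
    by (rule nn_integral_cong) (simp add: jb_def abs_minus_commute)
  then show ?thesis by (simp add: Ib_shift)
qed

lemma cube_tail_n:
  assumes a: "a > 0" and "\<beta> > 1"
  shows "(\<integral>\<^sup>+y. ennreal (jb (c - y^3) powr (-\<beta>)) * indicator {a..a + real n} y \<partial>lborel)
           \<le> ennreal (1 / (3 * a^2)) * Ib \<beta>"
proof -
  define f where "f t = jb (c - t) powr (-\<beta>)" for t
  have fm[measurable]: "f \<in> borel_measurable borel" unfolding f_def[abs_def] by measurable
  have sub: "(\<integral>\<^sup>+x. f x * indicator {a^3..(a + real n)^3} x \<partial>lborel) =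
             (\<integral>\<^sup>+x. f (x^3) * (3 * x^2) * indicator {a..a + real n} x \<partial>lborel)"
    by (rule nn_integral_substitution[where g="\<lambda>y. y^3" and g'="\<lambda>y. 3 * y^2" and f=f])
       (auto intro!: derivative_eq_intros continuous_intros simp: set_borel_measurable_def)
  have "(\<integral>\<^sup>+y. ennreal (jb (c - y^3) powr (-\<beta>)) * indicator {a..a + real n} y \<partial>lborel)
      \<le> (\<integral>\<^sup>+y. ennreal (1 / (3 * a^2)) * ennreal (f (y^3) * (3 * y^2) * indicator {a..a + real n} y) \<partial>lborel)"
  proof (rule nn_integral_mono)
    fix y :: real
    show "ennreal (jb (c - y^3) powr (-\<beta>)) * indicator {a..a + real n} y
        \<le> ennreal (1 / (3 * a^2)) * ennreal (f (y^3) * (3 * y^2) * indicator {a..a + real n} y)"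
    proof (cases "y \<in> {a..a + real n}")
      case True
      then have ya: "a \<le> y" by auto
      have "a^2 \<le> y^2" using ya a by (intro power_mono) auto
      then have "1 \<le> (1 / (3 * a^2)) * (3 * y^2)" using a by (simp add: field_simps)
      then have "f (y^3) * 1 \<le> f (y^3) * ((1 / (3 * a^2)) * (3 * y^2))"
        by (intro mult_left_mono) (auto simp: f_def)
      then have "ennreal (f (y^3)) \<le> ennreal ((1 / (3 * a^2)) * (f (y^3) * (3 * y^2)))"
        by (intro ennreal_leI) (simp add: algebra_simps)
      have i: "indicator {a..a + real n} y = (1::real)" using True by simp
      have i2: "(indicator {a..a + real n} y :: ennreal) = 1" using True by simp
      have fy: "f (y^3) = jb (c - y^3) powr (-\<beta>)" by (simp add: f_def)
      have nn1: "0 \<le> 1/(3*a^2)" using a by simp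
      have nn2: "0 \<le> f (y^3) * (3*y^2)" by (simp add: f_def)
      have m: "ennreal (1/(3*a^2)) * ennreal (f (y^3) * (3*y^2)) = ennreal ((1/(3*a^2)) * (f (y^3) * (3*y^2)))"
        using ennreal_mult[OF nn1 nn2] by simp
      show ?thesis unfolding i i2 mult_1_right m fy[symmetric]
        using \<open>ennreal (f (y^3)) \<le> _\<close> by simp
    qed simp
  qed
  also have "\<dots> = ennreal (1 / (3 * a^2)) * (\<integral>\<^sup>+x. f (x^3) * (3 * x^2) * indicator {a..a + real n} x \<partial>lborel)"
    by (rule nn_integral_cmult) measurable
  also have "\<dots> = ennreal (1 / (3 * a^2)) * (\<integral>\<^sup>+x. f x * indicator {a^3..(a + real n)^3} x \<partial>lborel)"
    by (simp add: sub)
  also have "\<dots> \<le> ennreal (1 / (3 * a^2)) * Ib \<beta>"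
  proof (intro mult_left_mono)
    have "(\<integral>\<^sup>+x. f x * indicator {a^3..(a + real n)^3} x \<partial>lborel) \<le> (\<integral>\<^sup>+x. ennreal (jb (c - x) powr (-\<beta>)) \<partial>lborel)"
      by (intro nn_integral_mono) (auto simp: f_def split: split_indicator)
    then show "(\<integral>\<^sup>+x. f x * indicator {a^3..(a + real n)^3} x \<partial>lborel) \<le> Ib \<beta>"
      by (simp add: Ib_shift)
  qed simp
  finally show ?thesis .
qed

lemma cube_tail:
  assumes a: "a > 0" and b: "\<beta> > 1"
  shows "(\<integral>\<^sup>+y. ennreal (jb (c - y^3) powr (-\<beta>)) * indicator {a..} y \<partial>lborel)
           \<le> ennreal (1 / (3 * a^2)) * Ib \<beta>"
proof -
  let ?g = "\<lambda>n y. ennreal (jb (c - y^3) powr (-\<beta>)) * indicator {a..a + real n} y"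
  have gle: "?g m y \<le> ?g n y" if "m \<le> n" for m n y
  proof (rule mult_left_mono)
    show "(indicator {a..a + real m} y :: ennreal) \<le> indicator {a..a + real n} y"
      using that unfolding indicator_def by auto
  qed simp
  have inc: "incseq ?g"
    unfolding incseq_def le_fun_def using gle by blast
  have eq: "(\<lambda>y. ennreal (jb (c - y^3) powr (-\<beta>)) * indicator {a..} y) = (\<lambda>y. SUP n. ?g n y)"
  proof
    fix y :: real
    show "ennreal (jb (c - y^3) powr (-\<beta>)) * indicator {a..} y = (SUP n. ?g n y)"
    proof (rule antisym)
      show "(SUP n. ?g n y) \<le> ennreal (jb (c - y^3) powr (-\<beta>)) * indicator {a..} y"
      proof (rule SUP_least)
        fix n
        show "?g n y \<le> ennreal (jb (c - y^3) powr (-\<beta>)) * indicator {a..} y"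
        proof (rule mult_left_mono)
          show "(indicator {a..a + real n} y :: ennreal) \<le> indicator {a..} y"
            unfolding indicator_def by auto
        qed simp
      qed
      show "ennreal (jb (c - y^3) powr (-\<beta>)) * indicator {a..} y \<le> (SUP n. ?g n y)"
      proof (cases "a \<le> y")
        case True
        have "y \<le> a + real (nat \<lceil>y - a\<rceil>)" by linarith
        then have "?g (nat \<lceil>y - a\<rceil>) y = ennreal (jb (c - y^3) powr (-\<beta>)) * indicator {a..} y"
          using True unfolding indicator_def by simp
        moreover have "?g (nat \<lceil>y - a\<rceil>) y \<le> (SUP n. ?g n y)" by (rule SUP_upper) simp
        ultimately show ?thesis by simp
      qed simp
    qed
  qed
  have "(\<integral>\<^sup>+y. ennreal (jb (c - y^3) powr (-\<beta>)) * indicator {a..} y \<partial>lborel) = (SUP n. \<integral>\<^sup>+y. ?g n y \<partial>lborel)"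
    unfolding eq by (rule nn_integral_monotone_convergence_SUP[OF inc]) measurable
  also have "\<dots> \<le> ennreal (1 / (3 * a^2)) * Ib \<beta>"
    by (rule SUP_least) (rule cube_tail_n[OF a b])
  finally show ?thesis .
qed

lemma cube_tail2:
  assumes a: "a > 0" and b: "\<beta> > 1"
  shows "(\<integral>\<^sup>+y. ennreal (jb (c - y^3) powr (-\<beta>)) * indicator {y. a \<le> \<bar>y\<bar>} y \<partial>lborel)
           \<le> ennreal (2 / (3 * a^2)) * Ib \<beta>"
proof -
  have "(\<integral>\<^sup>+y. ennreal (jb (c - y^3) powr (-\<beta>)) * indicator {y. a \<le> \<bar>y\<bar>} y \<partial>lborel)
      \<le> (\<integral>\<^sup>+y. ennreal (jb (c - y^3) powr (-\<beta>)) * indicator {a..} y + ennreal (jb (c - y^3) powr (-\<beta>)) * indicator {..-a} y \<partial>lborel)"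
    by (intro nn_integral_mono) (auto split: split_indicator)
  also have "\<dots> = (\<integral>\<^sup>+y. ennreal (jb (c - y^3) powr (-\<beta>)) * indicator {a..} y \<partial>lborel) + (\<integral>\<^sup>+y. ennreal (jb (c - y^3) powr (-\<beta>)) * indicator {..-a} y \<partial>lborel)"
    by (rule nn_integral_add) auto
  also have "(\<integral>\<^sup>+y. ennreal (jb (c - y^3) powr (-\<beta>)) * indicator {..-a} y \<partial>lborel)
      = (\<integral>\<^sup>+y. ennreal (jb ((-c) - y^3) powr (-\<beta>)) * indicator {a..} y \<partial>lborel)"
  proof -
    have "(\<integral>\<^sup>+y. ennreal (jb (c - y^3) powr (-\<beta>)) * indicator {..-a} y \<partial>lborel)
      = ennreal \<bar>-1\<bar> * (\<integral>\<^sup>+y. ennreal (jb (c - (0 + -1 * y)^3) powr (-\<beta>)) * indicator {..-a} (0 + -1 * y) \<partial>lborel)"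
      by (rule nn_integral_real_affine) auto
    also have "\<dots> = (\<integral>\<^sup>+y. ennreal (jb ((-c) - y^3) powr (-\<beta>)) * indicator {a..} y \<partial>lborel)"
    proof -
      have j: "jb (c - (0 + -1 * y)^3) = jb ((-c) - y^3)" for y
      proof -
        have "c - (0 + -1 * y)^3 = - ((-c) - y^3)" by (simp add: power_minus_odd)
        then show ?thesis by (simp only: jb_minus)
      qed
      have "ennreal (jb (c - (0 + -1*y)^3) powr -\<beta>) * indicator {..-a} (0 + -1*y) = ennreal (jb (-c - y^3) powr -\<beta>) * indicator {a..} y" for y
        by (simp only: j) (simp add: indicator_def)
      then show ?thesis by simp
    qed
    finally show ?thesis .
  qed
  also have "(\<integral>\<^sup>+y. ennreal (jb (c - y^3) powr (-\<beta>)) * indicator {a..} y \<partial>lborel) + (\<integral>\<^sup>+y. ennreal (jb ((-c) - y^3) powr (-\<beta>)) * indicator {a..} y \<partial>lborel)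
     \<le> ennreal (1 / (3 * a^2)) * Ib \<beta> + ennreal (1 / (3 * a^2)) * Ib \<beta>"
    by (intro add_mono cube_tail a b)
  also have "\<dots> = ennreal (2 / (3 * a^2)) * Ib \<beta>"
  proof -
    have "ennreal (1 / (3 * a^2)) + ennreal (1 / (3 * a^2)) = ennreal (2 / (3 * a^2))"
      using a by (subst ennreal_plus[symmetric]) auto
    then show ?thesis by (metis distrib_right)
  qed
  finally show ?thesis .
qed


lemma ennsqrt_sq[simp]: "(ennsqrt x)^2 = x"
  by (cases x) (auto simp: ennsqrt_def ennreal_power)

lemma ennsqrt_sq2[simp]: "ennsqrt x * ennsqrt x = x"
  using ennsqrt_sq[of x] by (simp add: power2_eq_square)

lemma ennsqrt_of_sq[simp]: "ennsqrt (x^2) = x"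
proof (cases x)
  case (real r)
  then show ?thesis by (auto simp: ennsqrt_def ennreal_power)
qed (simp add: ennsqrt_def)

lemma ennsqrt_mono: "x \<le> y \<Longrightarrow> ennsqrt x \<le> ennsqrt y"
  by (cases x; cases y) (auto simp: ennsqrt_def ennreal_le_iff top_unique)

lemma ennsqrt_le: "a^2 \<le> x \<Longrightarrow> a \<le> ennsqrt x"
  using ennsqrt_mono[of "a^2" x] by simp

lemma ennsqrt_0[simp]: "ennsqrt 0 = 0" by (simp add: ennsqrt_def)

lemma ennsqrt_mult: "ennsqrt (x * y) = ennsqrt x * ennsqrt y"
proof -
  have "(ennsqrt x * ennsqrt y)^2 = x * y" by (simp add: power_mult_distrib)
  then have "ennsqrt (x * y) = ennsqrt ((ennsqrt x * ennsqrt y)^2)" by simp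
  then show ?thesis by simp
qed

lemma ennsqrt_meas[measurable]: "ennsqrt \<in> borel_measurable borel"
  unfolding ennsqrt_def[abs_def] by measurable

lemma WCS:
  fixes a b h :: "'a \<Rightarrow> ennreal"
  assumes [measurable]: "a \<in> borel_measurable M" "b \<in> borel_measurable M" "h \<in> borel_measurable M"
  shows "(\<integral>\<^sup>+x. a x * b x * h x \<partial>M)^2 \<le> (\<integral>\<^sup>+x. (a x)^2 * h x \<partial>M) * (\<integral>\<^sup>+x. (b x)^2 * h x \<partial>M)"
proof -
  have "(\<integral>\<^sup>+x. (a x * ennsqrt (h x)) * (b x * ennsqrt (h x)) \<partial>M)^2
     \<le> (\<integral>\<^sup>+x. (a x * ennsqrt (h x))^2 \<partial>M) * (\<integral>\<^sup>+x. (b x * ennsqrt (h x))^2 \<partial>M)"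
    by (rule Cauchy_Schwarz_nn_integral) measurable
  moreover have "\<And>x. (a x * ennsqrt (h x)) * (b x * ennsqrt (h x)) = a x * b x * h x"
    by (metis ennsqrt_sq2 mult.assoc mult.left_commute)
  moreover have "\<And>x. (a x * ennsqrt (h x))^2 = (a x)^2 * h x"
    by (simp add: power_mult_distrib)
  moreover have "\<And>x. (b x * ennsqrt (h x))^2 = (b x)^2 * h x"
    by (simp add: power_mult_distrib)
  ultimately show ?thesis by simp
qed

lemma WCS1:
  fixes a h :: "'a \<Rightarrow> ennreal"
  assumes [measurable]: "a \<in> borel_measurable M" "h \<in> borel_measurable M"
  shows "(\<integral>\<^sup>+x. a x * h x \<partial>M)^2 \<le> (\<integral>\<^sup>+x. (a x)^2 * h x \<partial>M) * (\<integral>\<^sup>+x. h x \<partial>M)"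
  using WCS[of a M "\<lambda>_. 1" h] by simp

lemma young:
  fixes F Q :: "pt \<Rightarrow> ennreal"
  assumes [measurable]: "F \<in> borel_measurable borel" "Q \<in> borel_measurable borel"
  shows "(\<integral>\<^sup>+z. (cv F Q z)^2 \<partial>lborel) \<le> (\<integral>\<^sup>+z. (F z)^2 \<partial>lborel) * (\<integral>\<^sup>+z. Q z \<partial>lborel)^2"
proof -
  have "(cv F Q z)^2 \<le> cv (\<lambda>w. (F w)^2) Q z * (\<integral>\<^sup>+w. Q w \<partial>lborel)" for z
  proof -
    have "(cv F Q z)^2 \<le> (\<integral>\<^sup>+w. (F w)^2 * Q (z - w) \<partial>lborel) * (\<integral>\<^sup>+w. Q (z - w) \<partial>lborel)"
      unfolding cv_def by (rule WCS1) measurable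
    also have "(\<integral>\<^sup>+w. Q (z - w) \<partial>lborel) = (\<integral>\<^sup>+w. Q w \<partial>lborel)"
      by (rule pt_refl) measurable
    finally show ?thesis unfolding cv_def .
  qed
  then have "(\<integral>\<^sup>+z. (cv F Q z)^2 \<partial>lborel) \<le> (\<integral>\<^sup>+z. cv (\<lambda>w. (F w)^2) Q z * (\<integral>\<^sup>+w. Q w \<partial>lborel) \<partial>lborel)"
    by (intro nn_integral_mono) simp
  also have "\<dots> = (\<integral>\<^sup>+z. cv (\<lambda>w. (F w)^2) Q z \<partial>lborel) * (\<integral>\<^sup>+w. Q w \<partial>lborel)"
    by (rule nn_integral_multc) measurable
  also have "\<dots> = (\<integral>\<^sup>+z. (F z)^2 \<partial>lborel) * (\<integral>\<^sup>+z. Q z \<partial>lborel)^2"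
    by (subst cv_integral) (auto simp: power2_eq_square mult.assoc)
  finally show ?thesis .
qed

lemma sq_add_le: "((x::ennreal) + y)^2 \<le> 2 * x^2 + 2 * y^2"
proof -
  have "(x + y)^2 = x^2 + y^2 + 2 * x * y"
    unfolding power2_eq_square mult_2 by (simp add: distrib_left distrib_right add_ac mult.commute)
  also have "\<dots> \<le> x^2 + y^2 + (x^2 + y^2)" by (intro add_left_mono sum_of_squares_ge_ennreal)
  also have "\<dots> = 2 * x^2 + 2 * y^2" by (simp add: mult_2 algebra_simps)
  finally show ?thesis .
qed

lemma prod_le_sq_sum: "(x::ennreal) * y \<le> x^2 + y^2"
proof -
  have "x * y \<le> x * y + x * y" by simp
  also have "\<dots> = 2 * x * y" by (simp add: mult_2 distrib_right)
  also have "\<dots> \<le> x^2 + y^2" by (rule sum_of_squares_ge_ennreal)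
  finally show ?thesis .
qed


lemma pt_split2:
  fixes f :: "pt \<Rightarrow> ennreal"
  assumes [measurable]: "f \<in> borel_measurable borel"
  shows "(\<integral>\<^sup>+w. f w \<partial>lborel) = (\<integral>\<^sup>+x. \<integral>\<^sup>+y. f (x,y) \<partial>lborel \<partial>lborel)"
proof -
  have m: "f \<in> borel_measurable (lborel \<Otimes>\<^sub>M lborel)"
    by (simp add: lborel_prod)
  show ?thesis using lborel.nn_integral_fst[OF m] by (simp add: lborel_prod)
qed

definition Wt :: "real \<Rightarrow> real \<Rightarrow> pt \<Rightarrow> real" where
  "Wt s b z = jb (fst z) powr s * jb (snd z - fst z ^ 3) powr b"

lemma fst_pt_meas[measurable]: "fst \<in> borel_measurable (borel :: pt measure)"
  by (intro borel_measurable_continuous_onI continuous_intros)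

lemma snd_pt_meas[measurable]: "snd \<in> borel_measurable (borel :: pt measure)"
  by (intro borel_measurable_continuous_onI continuous_intros)

lemma jb_ne0[simp]: "jb x \<noteq> 0"
  using jb_pos[of x] by linarith

lemma jb_powr_pos[simp]: "jb x powr a > 0"
  using jb_pos[of x] by (simp del: jb_pos)

lemma jb_powr_nonneg[simp]: "jb x powr a \<ge> 0"
  using jb_powr_pos[of x a] by linarith

lemma Wt_pos[simp]: "Wt s b z > 0"
  unfolding Wt_def by (intro mult_pos_pos jb_powr_pos)

lemma Wt_nonneg[simp]: "Wt s b z \<ge> 0"
  using Wt_pos[of s b z] by linarith

lemma Wt_meas[measurable]: "Wt s b \<in> borel_measurable borel"
  unfolding Wt_def[abs_def] by measurable

definition NF :: "real \<Rightarrow> real \<Rightarrow> (pt \<Rightarrow> ennreal) \<Rightarrow> ennreal" where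
  "NF s b F = (\<integral>\<^sup>+z. (ennreal (Wt s b z) * F z)^2 \<partial>lborel)"

lemma inv_weight_int:
  "(\<integral>\<^sup>+z. ennreal (jb (fst z) powr (- a) * jb (snd z - fst z ^ 3) powr (- c)) \<partial>lborel) = Ib a * Ib c"
proof -
  have "(\<integral>\<^sup>+z. ennreal (jb (fst z) powr (- a) * jb (snd z - fst z ^ 3) powr (- c)) \<partial>lborel)
     = (\<integral>\<^sup>+x. \<integral>\<^sup>+y. ennreal (jb x powr (- a) * jb (y - x ^ 3) powr (- c)) \<partial>lborel \<partial>lborel)"
    by (subst pt_split2) auto
  also have "\<dots> = (\<integral>\<^sup>+x. ennreal (jb x powr (- a)) * Ib c \<partial>lborel)"
  proof (rule nn_integral_cong)
    fix x :: real
    have "(\<integral>\<^sup>+y. ennreal (jb x powr (- a) * jb (y - x ^ 3) powr (- c)) \<partial>lborel)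
       = (\<integral>\<^sup>+y. ennreal (jb x powr (- a)) * ennreal (jb (y - x ^ 3) powr (- c)) \<partial>lborel)"
      by (simp add: ennreal_mult)
    also have "\<dots> = ennreal (jb x powr (- a)) * (\<integral>\<^sup>+y. ennreal (jb (y - x ^ 3) powr (- c)) \<partial>lborel)"
      by (rule nn_integral_cmult) measurable
    also have "\<dots> = ennreal (jb x powr (- a)) * Ib c" by (simp add: Ib_shift2)
    finally show "(\<integral>\<^sup>+y. ennreal (jb x powr (- a) * jb (y - x ^ 3) powr (- c)) \<partial>lborel) = ennreal (jb x powr (- a)) * Ib c" .
  qed
  also have "\<dots> = Ib a * Ib c" unfolding Ib_def by (rule nn_integral_multc) measurable
  finally show ?thesis .
qed

lemma L1_bound:
  fixes F :: "pt \<Rightarrow> ennreal"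
  assumes [measurable]: "F \<in> borel_measurable borel"
  shows "(\<integral>\<^sup>+z. ennreal (jb (fst z) powr t) * F z \<partial>lborel)^2 \<le> Ib (2 * s - 2 * t) * Ib (2 * b) * NF s b F"
proof -
  define g where "g z = jb (fst z) powr (t - s) * jb (snd z - fst z ^ 3) powr (- b)" for z
  have gm[measurable]: "g \<in> borel_measurable borel" unfolding g_def[abs_def] by measurable
  have e1: "ennreal (jb (fst z) powr t) * F z = (ennreal (Wt s b z) * F z) * ennreal (g z)" for z
  proof -
    have "Wt s b z * g z = jb (fst z) powr t"
      unfolding Wt_def g_def
      by (simp add: powr_add[symmetric] mult.commute mult.left_commute)
    then have "ennreal (Wt s b z) * ennreal (g z) = ennreal (jb (fst z) powr t)"
      by (simp add: ennreal_mult'[symmetric] g_def)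
    then show ?thesis by (metis mult.commute mult.left_commute)
  qed
  have e2: "(ennreal (g z))^2 = ennreal (jb (fst z) powr (- (2 * s - 2 * t)) * jb (snd z - fst z ^ 3) powr (- (2 * b)))" for z
  proof -
    have "(g z)^2 = jb (fst z) powr (- (2 * s - 2 * t)) * jb (snd z - fst z ^ 3) powr (- (2 * b))"
      unfolding g_def power2_eq_square
      by (simp add: powr_add[symmetric] algebra_simps)
    moreover have "g z \<ge> 0" by (simp add: g_def)
    ultimately show ?thesis using ennreal_power[of "g z" 2] by simp
  qed
  have "(\<integral>\<^sup>+z. ennreal (jb (fst z) powr t) * F z \<partial>lborel)^2
      = (\<integral>\<^sup>+z. (ennreal (Wt s b z) * F z) * ennreal (g z) \<partial>lborel)^2"
    by (simp add: e1)
  also have "\<dots> \<le> (\<integral>\<^sup>+z. (ennreal (Wt s b z) * F z)^2 \<partial>lborel) * (\<integral>\<^sup>+z. (ennreal (g z))^2 \<partial>lborel)"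
    by (rule Cauchy_Schwarz_nn_integral) measurable
  also have "(\<integral>\<^sup>+z. (ennreal (g z))^2 \<partial>lborel) = Ib (2 * s - 2 * t) * Ib (2 * b)"
    by (simp only: e2 inv_weight_int)
  finally show ?thesis unfolding NF_def by (simp add: mult.commute mult.left_commute)
qed

lemma jb_eta_bound:
  assumes "b \<ge> 0" "s \<ge> 3 * b"
  shows "jb y powr b \<le> Wt s b (x, y)"
proof -
  have "jb y \<le> jb (y - x^3) * jb x ^ 3"
  proof -
    have a: "\<bar>y\<bar> \<le> \<bar>y - x^3\<bar> + \<bar>x\<bar>^3" by (simp add: abs_triangle_ineq4 power_abs[symmetric])
    have "(1 + \<bar>y - x^3\<bar>) * (1 + \<bar>x\<bar>)^3 \<ge> (1 + \<bar>y - x^3\<bar>) * (1 + \<bar>x\<bar>^3)"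
    proof (rule mult_left_mono)
      have "(1 + \<bar>x\<bar>)^3 = 1 + 3*\<bar>x\<bar> + 3*\<bar>x\<bar>^2 + \<bar>x\<bar>^3" by (simp add: power3_eq_cube algebra_simps power2_eq_square)
      then show "1 + \<bar>x\<bar>^3 \<le> (1 + \<bar>x\<bar>)^3" by simp
    qed simp
    moreover have "(1 + \<bar>y - x^3\<bar>) * (1 + \<bar>x\<bar>^3) \<ge> 1 + \<bar>y - x^3\<bar> + \<bar>x\<bar>^3"
      by (simp add: algebra_simps)
    ultimately show ?thesis using a unfolding jb_def by linarith
  qed
  then have "jb y powr b \<le> (jb (y - x^3) * jb x ^ 3) powr b"
    using assms by (intro powr_mono2) auto
  also have "\<dots> = jb (y - x^3) powr b * jb x powr (3 * b)"
  proof -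
    have c: "jb x ^ 3 = jb x powr 3" using powr_realpow[of "jb x" 3] by simp
    have "(jb x ^ 3) powr b = (jb x powr 3) powr b" by (simp only: c)
    also have "\<dots> = jb x powr (3 * b)" by (simp only: powr_powr)
    finally have "(jb x ^ 3) powr b = jb x powr (3 * b)" .
    moreover have "(jb (y - x^3) * jb x ^ 3) powr b = jb (y - x^3) powr b * (jb x ^ 3) powr b"
      by (rule powr_mult)
    ultimately show ?thesis by simp
  qed
  also have "\<dots> \<le> jb (y - x^3) powr b * jb x powr s"
    using assms by (intro mult_left_mono powr_mono) auto
  finally show ?thesis by (simp add: Wt_def mult.commute)
qed


lemma conv1d_int:
  fixes f g :: "real \<Rightarrow> ennreal"
  assumes [measurable]: "f \<in> borel_measurable borel" "g \<in> borel_measurable borel"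
  shows "(\<integral>\<^sup>+y. \<integral>\<^sup>+x. f x * g (y - x) \<partial>lborel \<partial>lborel) = (\<integral>\<^sup>+x. f x \<partial>lborel) * (\<integral>\<^sup>+x. g x \<partial>lborel)"
proof -
  have "(\<integral>\<^sup>+y. \<integral>\<^sup>+x. f x * g (y - x) \<partial>lborel \<partial>lborel) = (\<integral>\<^sup>+x. \<integral>\<^sup>+y. f x * g (y - x) \<partial>lborel \<partial>lborel)"
    by (rule lborel_pair.Fubini') measurable
  also have "\<dots> = (\<integral>\<^sup>+x. f x * (\<integral>\<^sup>+y. g y \<partial>lborel) \<partial>lborel)"
  proof (rule nn_integral_cong)
    fix x :: real
    have "(\<integral>\<^sup>+y. g y \<partial>lborel) = ennreal \<bar>1\<bar> * (\<integral>\<^sup>+y. g (- x + 1 * y) \<partial>lborel)"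
      by (rule nn_integral_real_affine) auto
    then have "(\<integral>\<^sup>+y. g (y - x) \<partial>lborel) = (\<integral>\<^sup>+y. g y \<partial>lborel)" by simp
    then show "(\<integral>\<^sup>+y. f x * g (y - x) \<partial>lborel) = f x * (\<integral>\<^sup>+y. g y \<partial>lborel)"
      by (simp add: nn_integral_cmult)
  qed
  also have "\<dots> = (\<integral>\<^sup>+x. f x \<partial>lborel) * (\<integral>\<^sup>+x. g x \<partial>lborel)"
    by (rule nn_integral_multc) measurable
  finally show ?thesis .
qed

lemma refl1d:
  fixes g :: "real \<Rightarrow> ennreal"
  assumes [measurable]: "g \<in> borel_measurable borel"
  shows "(\<integral>\<^sup>+x. g (c - x) \<partial>lborel) = (\<integral>\<^sup>+x. g x \<partial>lborel)"
proof -
  have "(\<integral>\<^sup>+y. g y \<partial>lborel) = ennreal \<bar>-1\<bar> * (\<integral>\<^sup>+y. g (c + -1 * y) \<partial>lborel)"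
    by (rule nn_integral_real_affine) auto
  then show ?thesis by simp
qed

lemma CS_sqrt:
  fixes f g :: "'a \<Rightarrow> ennreal"
  assumes [measurable]: "f \<in> borel_measurable M" "g \<in> borel_measurable M"
  shows "(\<integral>\<^sup>+x. f x * g x \<partial>M) \<le> ennsqrt (\<integral>\<^sup>+x. (f x)^2 \<partial>M) * ennsqrt (\<integral>\<^sup>+x. (g x)^2 \<partial>M)"
proof -
  have "(\<integral>\<^sup>+x. f x * g x \<partial>M)^2 \<le> (\<integral>\<^sup>+x. (f x)^2 \<partial>M) * (\<integral>\<^sup>+x. (g x)^2 \<partial>M)"
    by (rule Cauchy_Schwarz_nn_integral) measurable
  then show ?thesis by (metis ennsqrt_le ennsqrt_mult)
qed

definition sl :: "(pt \<Rightarrow> ennreal) \<Rightarrow> real \<Rightarrow> ennreal" where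
  "sl F y = ennsqrt (\<integral>\<^sup>+x. (F (x, y))^2 \<partial>lborel)"

lemma sl_meas[measurable]:
  assumes [measurable]: "F \<in> borel_measurable borel"
  shows "sl F \<in> borel_measurable borel"
  unfolding sl_def[abs_def] by measurable

lemma sl_int:
  fixes F :: "pt \<Rightarrow> ennreal"
  assumes [measurable]: "F \<in> borel_measurable borel" and b: "b > 1/2" "s \<ge> 3 * b"
  shows "(\<integral>\<^sup>+y. sl F y \<partial>lborel)^2 \<le> Ib (2 * b) * NF s b F"
proof -
  have "(\<integral>\<^sup>+y. sl F y \<partial>lborel)^2 = (\<integral>\<^sup>+y. ennreal (jb y powr (- b)) * (ennreal (jb y powr b) * sl F y) \<partial>lborel)^2"
  proof -
    have "ennreal (jb y powr (- b)) * (ennreal (jb y powr b) * sl F y) = sl F y" for y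
    proof -
      have "ennreal (jb y powr (- b)) * ennreal (jb y powr b) = 1"
        by (simp add: ennreal_mult'[symmetric] powr_minus)
      then show ?thesis by (metis mult.assoc mult_1)
    qed
    then show ?thesis by simp
  qed
  also have "\<dots> \<le> (\<integral>\<^sup>+y. (ennreal (jb y powr (- b)))^2 \<partial>lborel) * (\<integral>\<^sup>+y. (ennreal (jb y powr b) * sl F y)^2 \<partial>lborel)"
    by (rule Cauchy_Schwarz_nn_integral) measurable
  also have "(\<integral>\<^sup>+y. (ennreal (jb y powr (- b)))^2 \<partial>lborel) = Ib (2 * b)"
  proof -
    have "(ennreal (jb y powr (- b)))^2 = ennreal (jb y powr (- (2 * b)))" for y
    proof -
      have "(jb y powr (- b))^2 = jb y powr (- (2 * b))"
        by (simp add: power2_eq_square powr_add[symmetric])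
      then show ?thesis using ennreal_power[of "jb y powr (- b)" 2] by simp
    qed
    then show ?thesis unfolding Ib_def by simp
  qed
  also have "(\<integral>\<^sup>+y. (ennreal (jb y powr b) * sl F y)^2 \<partial>lborel) \<le> NF s b F"
  proof -
    have "(\<integral>\<^sup>+y. (ennreal (jb y powr b) * sl F y)^2 \<partial>lborel)
        = (\<integral>\<^sup>+y. \<integral>\<^sup>+x. (ennreal (jb y powr b) * F (x, y))^2 \<partial>lborel \<partial>lborel)"
    proof (rule nn_integral_cong)
      fix y :: real
      have "(ennreal (jb y powr b) * sl F y)^2 = (ennreal (jb y powr b))^2 * (\<integral>\<^sup>+x. (F (x, y))^2 \<partial>lborel)"
        unfolding sl_def by (simp add: power_mult_distrib)
      also have "\<dots> = (\<integral>\<^sup>+x. (ennreal (jb y powr b))^2 * (F (x, y))^2 \<partial>lborel)"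
        by (rule nn_integral_cmult[symmetric]) measurable
      finally show "(ennreal (jb y powr b) * sl F y)^2 = (\<integral>\<^sup>+x. (ennreal (jb y powr b) * F (x, y))^2 \<partial>lborel)"
        by (simp add: power_mult_distrib)
    qed
    also have "\<dots> \<le> (\<integral>\<^sup>+y. \<integral>\<^sup>+x. (ennreal (Wt s b (x, y)) * F (x, y))^2 \<partial>lborel \<partial>lborel)"
    proof (intro nn_integral_mono)
      fix x y :: real
      have "jb y powr b \<le> Wt s b (x, y)" by (rule jb_eta_bound) (use b in auto)
      then have "ennreal (jb y powr b) * F (x, y) \<le> ennreal (Wt s b (x, y)) * F (x, y)"
        by (intro mult_right_mono ennreal_leI) auto
      then show "(ennreal (jb y powr b) * F (x, y))^2 \<le> (ennreal (Wt s b (x, y)) * F (x, y))^2"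
        by (rule power_mono) simp
    qed
    also have "\<dots> = NF s b F" unfolding NF_def by (subst pt_split[of "\<lambda>z. (ennreal (Wt s b z) * F z)^2"]) auto
    finally show ?thesis .
  qed
  finally show ?thesis by (simp add: mult_left_mono)
qed

lemma slice:
  fixes F1 F2 :: "pt \<Rightarrow> ennreal"
  assumes [measurable]: "F1 \<in> borel_measurable borel" "F2 \<in> borel_measurable borel"
  shows "cv F1 F2 (x, y) \<le> (\<integral>\<^sup>+y'. sl F1 y' * sl F2 (y - y') \<partial>lborel)"
proof -
  have "cv F1 F2 (x, y) = (\<integral>\<^sup>+y'. \<integral>\<^sup>+x'. F1 (x', y') * F2 (x - x', y - y') \<partial>lborel \<partial>lborel)"
    unfolding cv_def by (subst pt_split) auto
  also have "\<dots> \<le> (\<integral>\<^sup>+y'. sl F1 y' * sl F2 (y - y') \<partial>lborel)"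
  proof (rule nn_integral_mono)
    fix y' :: real
    have "(\<integral>\<^sup>+x'. F1 (x', y') * F2 (x - x', y - y') \<partial>lborel)
       \<le> ennsqrt (\<integral>\<^sup>+x'. (F1 (x', y'))^2 \<partial>lborel) * ennsqrt (\<integral>\<^sup>+x'. (F2 (x - x', y - y'))^2 \<partial>lborel)"
      by (rule CS_sqrt) measurable
    also have "(\<integral>\<^sup>+x'. (F2 (x - x', y - y'))^2 \<partial>lborel) = (\<integral>\<^sup>+x'. (F2 (x', y - y'))^2 \<partial>lborel)"
      using refl1d[of "\<lambda>x'. (F2 (x', y - y'))^2" x] by simp
    finally show "(\<integral>\<^sup>+x'. F1 (x', y') * F2 (x - x', y - y') \<partial>lborel) \<le> sl F1 y' * sl F2 (y - y')"
      unfolding sl_def .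
  qed
  finally show ?thesis .
qed


lemma resonance_factor:
  fixes q :: "real \<Rightarrow> ennreal" and x y :: real
  assumes [measurable]: "q \<in> borel_measurable borel" and b: "b > 1/2" and x0: "x \<noteq> 0"
  shows "(\<integral>\<^sup>+w. indicator {w. 2 * \<bar>fst w\<bar> < \<bar>x\<bar>} w * ennreal (jb (snd ((x,y) - w) - fst ((x,y) - w)^3) powr (- (2 * b))) * q (snd w) \<partial>lborel)
     \<le> ennreal (8 / (3 * x^2)) * Ib (2 * b) * (\<integral>\<^sup>+y'. q y' \<partial>lborel)"
proof -
  let ?f = "\<lambda>w. indicator {w. 2 * \<bar>fst w\<bar> < \<bar>x\<bar>} w * ennreal (jb (snd ((x,y) - w) - fst ((x,y) - w)^3) powr (- (2 * b))) * q (snd w)"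
  have fm: "?f \<in> borel_measurable borel" by measurable
  have "(\<integral>\<^sup>+w. ?f w \<partial>lborel) = (\<integral>\<^sup>+y'. \<integral>\<^sup>+x'. ?f (x', y') \<partial>lborel \<partial>lborel)"
    by (rule pt_split[OF fm])
  also have "\<dots> \<le> (\<integral>\<^sup>+y'. q y' * (ennreal (8 / (3 * x^2)) * Ib (2 * b)) \<partial>lborel)"
  proof (rule nn_integral_mono)
    fix y' :: real
    let ?c = "y - y'"
    have "(\<integral>\<^sup>+x'. ?f (x', y') \<partial>lborel)
        = q y' * (\<integral>\<^sup>+x'. indicator {w. 2 * \<bar>fst w\<bar> < \<bar>x\<bar>} (x', y') * ennreal (jb (?c - (x - x')^3) powr (- (2 * b))) \<partial>lborel)"
    proof -
      have "?f (x', y') = q y' * (indicator {w. 2 * \<bar>fst w\<bar> < \<bar>x\<bar>} (x', y') * ennreal (jb (?c - (x - x')^3) powr (- (2 * b))))" for x'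
        by (simp add: mult.commute mult.left_commute)
      then show ?thesis by (simp add: nn_integral_cmult)
    qed
    moreover have "(\<integral>\<^sup>+x'. indicator {w. 2 * \<bar>fst w\<bar> < \<bar>x\<bar>} (x', y') * ennreal (jb (?c - (x - x')^3) powr (- (2 * b))) \<partial>lborel)
        \<le> ennreal (8 / (3 * x^2)) * Ib (2 * b)" (is "?I \<le> _")
    proof -
    have "?I \<le> (\<integral>\<^sup>+x'. (\<lambda>u. ennreal (jb (?c - u^3) powr (- (2 * b))) * indicator {u. \<bar>x\<bar> / 2 \<le> \<bar>u\<bar>} u) (x - x') \<partial>lborel)"
    proof (rule nn_integral_mono)
      fix x' :: real
      show "indicator {w. 2 * \<bar>fst w\<bar> < \<bar>x\<bar>} (x', y') * ennreal (jb (?c - (x - x')^3) powr (- (2 * b)))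
          \<le> (\<lambda>u. ennreal (jb (?c - u^3) powr (- (2 * b))) * indicator {u. \<bar>x\<bar> / 2 \<le> \<bar>u\<bar>} u) (x - x')"
      proof (cases "2 * \<bar>x'\<bar> < \<bar>x\<bar>")
        case True
        then have "\<bar>x\<bar> / 2 \<le> \<bar>x - x'\<bar>" by linarith
        then show ?thesis using True by (simp add: indicator_def)
      next
        case False
        then show ?thesis by (simp add: indicator_def)
      qed
    qed
    also have "\<dots> = (\<integral>\<^sup>+u. ennreal (jb (?c - u^3) powr (- (2 * b))) * indicator {u. \<bar>x\<bar> / 2 \<le> \<bar>u\<bar>} u \<partial>lborel)"
      by (rule refl1d) measurable
    also have "\<dots> \<le> ennreal (2 / (3 * (\<bar>x\<bar> / 2)^2)) * Ib (2 * b)"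
      by (rule cube_tail2) (use x0 b in auto)
    also have "ennreal (2 / (3 * (\<bar>x\<bar> / 2)^2)) * Ib (2 * b) = ennreal (8 / (3 * x^2)) * Ib (2 * b)"
    proof -
      have h: "(\<bar>x\<bar> / 2)^2 = x^2 / 4" by (simp add: power_divide)
      have e: "2 / (3 * (\<bar>x\<bar> / 2)^2) = 8 / (3 * x^2)" unfolding h using x0 by (simp add: field_simps)
      show ?thesis by (simp only: e)
    qed
    finally show ?thesis .
    qed
    ultimately show "(\<integral>\<^sup>+x'. ?f (x', y') \<partial>lborel) \<le> q y' * (ennreal (8 / (3 * x^2)) * Ib (2 * b))"
      by (simp add: mult_left_mono)
  qed
  also have "\<dots> = (\<integral>\<^sup>+y'. q y' \<partial>lborel) * (ennreal (8 / (3 * x^2)) * Ib (2 * b))"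
    by (rule nn_integral_multc) measurable
  finally show ?thesis by (simp only: mult.commute)
qed

lemma lemB:
  fixes G Q :: "pt \<Rightarrow> ennreal" and q :: "real \<Rightarrow> ennreal"
  assumes [measurable]: "G \<in> borel_measurable borel" "Q \<in> borel_measurable borel" "q \<in> borel_measurable borel"
    and b: "b > 1/2" and Qq: "\<And>x y. Q (x, y) \<le> q y"
  shows "(\<integral>\<^sup>+z. (ennreal \<bar>fst z\<bar> * cv Q G z)^2 \<partial>lborel)
     \<le> 8 * ((\<integral>\<^sup>+z. (G z)^2 \<partial>lborel) * (\<integral>\<^sup>+z. ennreal (jb (fst z)) * Q z \<partial>lborel)^2)
       + 2 * (ennreal (8/3) * Ib (2 * b) * (\<integral>\<^sup>+y. q y \<partial>lborel) * ((\<integral>\<^sup>+z. Q z \<partial>lborel) * (\<integral>\<^sup>+z. (ennreal (jb (snd z - fst z^3) powr b) * G z)^2 \<partial>lborel)))"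
proof -
  define JQ where "JQ w = ennreal (jb (fst w)) * Q w" for w
  have JQm[measurable]: "JQ \<in> borel_measurable borel" unfolding JQ_def[abs_def] by measurable
  define A where "A = cv JQ G"
  have Am[measurable]: "A \<in> borel_measurable borel" unfolding A_def by measurable
  define R where "R z = ennreal \<bar>fst z\<bar> * (\<integral>\<^sup>+w. (if 2 * \<bar>fst w\<bar> < \<bar>fst z\<bar> then Q w * G (z - w) else 0) \<partial>lborel)" for z
  have Rm[measurable]: "R \<in> borel_measurable borel" unfolding R_def[abs_def] by measurable
  define H where "H u = ennreal (jb (snd u - fst u^3) powr b) * G u" for u
  have Hm[measurable]: "H \<in> borel_measurable borel" unfolding H_def[abs_def] by measurable
  define K where "K u = ennreal (jb (snd u - fst u^3) powr (- b))" for u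
  have Km[measurable]: "K \<in> borel_measurable borel" unfolding K_def[abs_def] by measurable
  have HK: "H u * K u = G u" for u
  proof -
    have "ennreal (jb (snd u - fst u^3) powr b) * ennreal (jb (snd u - fst u^3) powr (- b)) = 1"
      by (simp add: ennreal_mult'[symmetric] powr_minus)
    then show ?thesis unfolding H_def K_def by (metis mult.commute mult.left_commute mult_1)
  qed
  have step1: "ennreal \<bar>fst z\<bar> * cv Q G z \<le> 2 * A z + R z" for z
  proof -
    have "ennreal \<bar>fst z\<bar> * cv Q G z = (\<integral>\<^sup>+w. ennreal \<bar>fst z\<bar> * (Q w * G (z - w)) \<partial>lborel)"
      unfolding cv_def by (rule nn_integral_cmult[symmetric]) measurable
    also have "\<dots> \<le> (\<integral>\<^sup>+w. 2 * (JQ w * G (z - w)) + ennreal \<bar>fst z\<bar> * (if 2 * \<bar>fst w\<bar> < \<bar>fst z\<bar> then Q w * G (z - w) else 0) \<partial>lborel)"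
    proof (rule nn_integral_mono)
      fix w :: pt
      show "ennreal \<bar>fst z\<bar> * (Q w * G (z - w)) \<le> 2 * (JQ w * G (z - w)) + ennreal \<bar>fst z\<bar> * (if 2 * \<bar>fst w\<bar> < \<bar>fst z\<bar> then Q w * G (z - w) else 0)"
      proof (cases "2 * \<bar>fst w\<bar> < \<bar>fst z\<bar>")
        case True
        then show ?thesis by (simp add: add_increasing)
      next
        case False
        then have a1: "\<bar>fst z\<bar> \<le> 2 * \<bar>fst w\<bar>" by linarith
        have "2 * \<bar>fst w\<bar> \<le> 2 * jb (fst w)" unfolding jb_def by simp
        with a1 have "\<bar>fst z\<bar> \<le> 2 * jb (fst w)" by (rule order_trans)
        then have "ennreal \<bar>fst z\<bar> \<le> ennreal (2 * jb (fst w))" by (rule ennreal_leI)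
        also have "ennreal (2 * jb (fst w)) = 2 * ennreal (jb (fst w))"
          using ennreal_mult[of 2 "jb (fst w)"] by simp
        finally have "ennreal \<bar>fst z\<bar> \<le> 2 * ennreal (jb (fst w))" .
        then have "ennreal \<bar>fst z\<bar> * (Q w * G (z - w)) \<le> 2 * ennreal (jb (fst w)) * (Q w * G (z - w))"
          by (rule mult_right_mono) simp
        also have "\<dots> = 2 * (JQ w * G (z - w))" unfolding JQ_def by (simp add: mult.assoc)
        finally show ?thesis using False by simp
      qed
    qed
    also have "\<dots> = 2 * A z + R z"
      unfolding A_def R_def cv_def
      by (subst nn_integral_add) (auto simp: nn_integral_cmult)
    finally show ?thesis .
  qed
  have "(\<integral>\<^sup>+z. (ennreal \<bar>fst z\<bar> * cv Q G z)^2 \<partial>lborel) \<le> (\<integral>\<^sup>+z. 8 * (A z)^2 + 2 * (R z)^2 \<partial>lborel)"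
  proof (rule nn_integral_mono)
    fix z :: pt
    have "(ennreal \<bar>fst z\<bar> * cv Q G z)^2 \<le> (2 * A z + R z)^2"
      by (rule power_mono[OF step1]) simp
    also have "\<dots> \<le> 2 * (2 * A z)^2 + 2 * (R z)^2" by (rule sq_add_le)
    also have "2 * (2 * A z)^2 = 8 * (A z)^2" by (simp add: power_mult_distrib mult.assoc[symmetric])
    finally show "(ennreal \<bar>fst z\<bar> * cv Q G z)^2 \<le> 8 * (A z)^2 + 2 * (R z)^2" .
  qed
  also have "\<dots> = 8 * (\<integral>\<^sup>+z. (A z)^2 \<partial>lborel) + 2 * (\<integral>\<^sup>+z. (R z)^2 \<partial>lborel)"
    by (subst nn_integral_add) (auto simp: nn_integral_cmult)
  finally have S2: "(\<integral>\<^sup>+z. (ennreal \<bar>fst z\<bar> * cv Q G z)^2 \<partial>lborel) \<le> 8 * (\<integral>\<^sup>+z. (A z)^2 \<partial>lborel) + 2 * (\<integral>\<^sup>+z. (R z)^2 \<partial>lborel)" .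
  have S3: "(\<integral>\<^sup>+z. (A z)^2 \<partial>lborel) \<le> (\<integral>\<^sup>+z. (G z)^2 \<partial>lborel) * (\<integral>\<^sup>+z. ennreal (jb (fst z)) * Q z \<partial>lborel)^2"
  proof -
    have "A z = cv G JQ z" for z unfolding A_def by (rule cv_comm) measurable
    then have "(\<integral>\<^sup>+z. (A z)^2 \<partial>lborel) = (\<integral>\<^sup>+z. (cv G JQ z)^2 \<partial>lborel)" by simp
    also have "\<dots> \<le> (\<integral>\<^sup>+z. (G z)^2 \<partial>lborel) * (\<integral>\<^sup>+z. JQ z \<partial>lborel)^2"
      by (rule young) measurable
    finally show ?thesis unfolding JQ_def .
  qed
  have S4: "(R z)^2 \<le> ennreal (8/3) * Ib (2 * b) * (\<integral>\<^sup>+y. q y \<partial>lborel) * cv Q (\<lambda>u. (H u)^2) z" for z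
  proof (cases "fst z = 0")
    case True
    then show ?thesis by (simp add: R_def)
  next
    case False
    obtain x y where z: "z = (x, y)" by (cases z)
    have x0: "x \<noteq> 0" using False z by simp
    define I where "I = (\<integral>\<^sup>+w. (if 2 * \<bar>fst w\<bar> < \<bar>fst z\<bar> then Q w * G (z - w) else 0) \<partial>lborel)"
    have "I = (\<integral>\<^sup>+w. H (z - w) * (K (z - w) * indicator {w. 2 * \<bar>fst w\<bar> < \<bar>x\<bar>} w) * Q w \<partial>lborel)"
    proof -
      have "(if 2 * \<bar>fst w\<bar> < \<bar>fst z\<bar> then Q w * G (z - w) else 0) = H (z - w) * (K (z - w) * indicator {w. 2 * \<bar>fst w\<bar> < \<bar>x\<bar>} w) * Q w" for w
        using HK[of "z - w"] z by (auto simp: indicator_def mult_ac)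
      then show ?thesis unfolding I_def by simp
    qed
    also have "\<dots>^2 \<le> (\<integral>\<^sup>+w. (H (z - w))^2 * Q w \<partial>lborel) * (\<integral>\<^sup>+w. (K (z - w) * indicator {w. 2 * \<bar>fst w\<bar> < \<bar>x\<bar>} w)^2 * Q w \<partial>lborel)"
      by (rule WCS) measurable
    finally have I2: "I^2 \<le> (\<integral>\<^sup>+w. (H (z - w))^2 * Q w \<partial>lborel) * (\<integral>\<^sup>+w. (K (z - w) * indicator {w. 2 * \<bar>fst w\<bar> < \<bar>x\<bar>} w)^2 * Q w \<partial>lborel)" .
    have c1: "(\<integral>\<^sup>+w. (H (z - w))^2 * Q w \<partial>lborel) = cv Q (\<lambda>u. (H u)^2) z"
      unfolding cv_def by (simp add: mult.commute)
    have c2: "(\<integral>\<^sup>+w. (K (z - w) * indicator {w. 2 * \<bar>fst w\<bar> < \<bar>x\<bar>} w)^2 * Q w \<partial>lborel)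
        \<le> ennreal (8 / (3 * x^2)) * Ib (2 * b) * (\<integral>\<^sup>+y'. q y' \<partial>lborel)"
    proof -
      have "(\<integral>\<^sup>+w. (K (z - w) * indicator {w. 2 * \<bar>fst w\<bar> < \<bar>x\<bar>} w)^2 * Q w \<partial>lborel)
          \<le> (\<integral>\<^sup>+w. indicator {w. 2 * \<bar>fst w\<bar> < \<bar>x\<bar>} w * ennreal (jb (snd ((x,y) - w) - fst ((x,y) - w)^3) powr (- (2 * b))) * q (snd w) \<partial>lborel)"
      proof (rule nn_integral_mono)
        fix w :: pt
        have k2: "(K (z - w))^2 = ennreal (jb (snd ((x,y) - w) - fst ((x,y) - w)^3) powr (- (2 * b)))"
        proof -
          have "(jb (snd ((x,y) - w) - fst ((x,y) - w)^3) powr (- b))^2 = jb (snd ((x,y) - w) - fst ((x,y) - w)^3) powr (- (2 * b))"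
            by (simp add: power2_eq_square powr_add[symmetric])
          then show ?thesis unfolding K_def z using ennreal_power[of "jb (snd ((x,y) - w) - fst ((x,y) - w)^3) powr (- b)" 2] by simp
        qed
        have qw: "Q w \<le> q (snd w)" using Qq[of "fst w" "snd w"] by simp
        show "(K (z - w) * indicator {w. 2 * \<bar>fst w\<bar> < \<bar>x\<bar>} w)^2 * Q w
           \<le> indicator {w. 2 * \<bar>fst w\<bar> < \<bar>x\<bar>} w * ennreal (jb (snd ((x,y) - w) - fst ((x,y) - w)^3) powr (- (2 * b))) * q (snd w)"
          unfolding power_mult_distrib k2 using qw
          by (auto simp: indicator_def intro: mult_left_mono)
      qed
      also have "\<dots> \<le> ennreal (8 / (3 * x^2)) * Ib (2 * b) * (\<integral>\<^sup>+y'. q y' \<partial>lborel)"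
        by (rule resonance_factor) (use x0 b in auto)
      finally show ?thesis .
    qed
    have "(R z)^2 = ennreal (x^2) * I^2"
      unfolding R_def I_def z by (simp add: power_mult_distrib ennreal_power)
    also have "\<dots> \<le> ennreal (x^2) * (cv Q (\<lambda>u. (H u)^2) z * (ennreal (8 / (3 * x^2)) * Ib (2 * b) * (\<integral>\<^sup>+y'. q y' \<partial>lborel)))"
    proof (rule mult_left_mono)
      have "I^2 \<le> cv Q (\<lambda>u. (H u)^2) z * (\<integral>\<^sup>+w. (K (z - w) * indicator {w. 2 * \<bar>fst w\<bar> < \<bar>x\<bar>} w)^2 * Q w \<partial>lborel)"
        using I2 c1 by simp
      also have "\<dots> \<le> cv Q (\<lambda>u. (H u)^2) z * (ennreal (8 / (3 * x^2)) * Ib (2 * b) * (\<integral>\<^sup>+y'. q y' \<partial>lborel))"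
        by (rule mult_left_mono[OF c2]) simp
      finally show "I^2 \<le> cv Q (\<lambda>u. (H u)^2) z * (ennreal (8 / (3 * x^2)) * Ib (2 * b) * (\<integral>\<^sup>+y'. q y' \<partial>lborel))" .
    qed simp
    also have "\<dots> = (ennreal (x^2) * ennreal (8 / (3 * x^2))) * Ib (2 * b) * (\<integral>\<^sup>+y'. q y' \<partial>lborel) * cv Q (\<lambda>u. (H u)^2) z"
      by (simp add: mult_ac)
    also have "ennreal (x^2) * ennreal (8 / (3 * x^2)) = ennreal (8/3)"
      using x0 by (simp add: ennreal_mult'[symmetric])
    finally show ?thesis .
  qed
  have S5: "(\<integral>\<^sup>+z. (R z)^2 \<partial>lborel) \<le> ennreal (8/3) * Ib (2 * b) * (\<integral>\<^sup>+y. q y \<partial>lborel) * ((\<integral>\<^sup>+z. Q z \<partial>lborel) * (\<integral>\<^sup>+z. (H z)^2 \<partial>lborel))"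
  proof -
    have "(\<integral>\<^sup>+z. (R z)^2 \<partial>lborel) \<le> (\<integral>\<^sup>+z. ennreal (8/3) * Ib (2 * b) * (\<integral>\<^sup>+y. q y \<partial>lborel) * cv Q (\<lambda>u. (H u)^2) z \<partial>lborel)"
      by (intro nn_integral_mono S4)
    also have "\<dots> = ennreal (8/3) * Ib (2 * b) * (\<integral>\<^sup>+y. q y \<partial>lborel) * (\<integral>\<^sup>+z. cv Q (\<lambda>u. (H u)^2) z \<partial>lborel)"
      by (rule nn_integral_cmult) measurable
    also have "(\<integral>\<^sup>+z. cv Q (\<lambda>u. (H u)^2) z \<partial>lborel) = (\<integral>\<^sup>+z. Q z \<partial>lborel) * (\<integral>\<^sup>+z. (H z)^2 \<partial>lborel)"
      by (rule cv_integral) measurable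
    finally show ?thesis .
  qed
  have "(\<integral>\<^sup>+z. (ennreal \<bar>fst z\<bar> * cv Q G z)^2 \<partial>lborel)
     \<le> 8 * ((\<integral>\<^sup>+z. (G z)^2 \<partial>lborel) * (\<integral>\<^sup>+z. ennreal (jb (fst z)) * Q z \<partial>lborel)^2)
       + 2 * (ennreal (8/3) * Ib (2 * b) * (\<integral>\<^sup>+y. q y \<partial>lborel) * ((\<integral>\<^sup>+z. Q z \<partial>lborel) * (\<integral>\<^sup>+z. (H z)^2 \<partial>lborel)))"
    using S2 S3 S5 by (meson add_mono mult_left_mono order_trans zero_le)
  then show ?thesis unfolding H_def .
qed


definition Weak :: "(pt \<Rightarrow> ennreal) \<Rightarrow> ennreal \<Rightarrow> bool" where
  "Weak R B \<longleftrightarrow> R \<in> borel_measurable borel \<and> (\<integral>\<^sup>+z. R z \<partial>lborel)^2 \<le> B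
      \<and> (\<integral>\<^sup>+z. ennreal (jb (fst z)) * R z \<partial>lborel)^2 \<le> B"

definition Good :: "(pt \<Rightarrow> ennreal) \<Rightarrow> ennreal \<Rightarrow> bool" where
  "Good R B \<longleftrightarrow> Weak R B \<and> (\<exists>q. q \<in> borel_measurable borel \<and> (\<forall>x y. R (x, y) \<le> q y)
      \<and> (\<integral>\<^sup>+y. q y \<partial>lborel)^2 \<le> B)"

lemma Weak_mono: "Weak R B \<Longrightarrow> B \<le> B' \<Longrightarrow> Weak R B'"
  unfolding Weak_def by (auto intro: order_trans)

lemma Good_mono: "Good R B \<Longrightarrow> B \<le> B' \<Longrightarrow> Good R B'"
  unfolding Good_def by (auto intro: order_trans Weak_mono)

lemma Weak_meas: "Weak R B \<Longrightarrow> R \<in> borel_measurable borel"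
  unfolding Weak_def by simp

lemma Good_Weak: "Good R B \<Longrightarrow> Weak R B"
  unfolding Good_def by simp

definition KX :: "real \<Rightarrow> real \<Rightarrow> ennreal" where
  "KX s b = Ib (2 * s) * Ib (2 * b) + Ib (2 * s - 2) * Ib (2 * b)"

lemma X_Weak:
  assumes [measurable]: "F \<in> borel_measurable borel"
  shows "Weak F (KX s b * NF s b F)"
proof -
  have a: "(\<integral>\<^sup>+z. F z \<partial>lborel)^2 \<le> Ib (2 * s - 2 * 0) * Ib (2 * b) * NF s b F"
    using L1_bound[of F 0 s b] by simp
  have b: "(\<integral>\<^sup>+z. ennreal (jb (fst z)) * F z \<partial>lborel)^2 \<le> Ib (2 * s - 2 * 1) * Ib (2 * b) * NF s b F"
    using L1_bound[of F 1 s b] by simp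
  have "Ib (2 * s - 2 * 0) * Ib (2 * b) * NF s b F \<le> KX s b * NF s b F"
    unfolding KX_def by (intro mult_right_mono) (auto intro: add_increasing2)
  moreover have "Ib (2 * s - 2 * 1) * Ib (2 * b) * NF s b F \<le> KX s b * NF s b F"
    unfolding KX_def by (intro mult_right_mono) (auto intro: add_increasing)
  ultimately show ?thesis unfolding Weak_def using a b by (auto intro: order_trans)
qed

lemma le4: "(x::ennreal) \<le> 4 * x"
proof -
  have "1 * x \<le> 4 * x" by (rule mult_right_mono) simp_all
  then show ?thesis by simp
qed

lemma jb_add: "jb (a + b) \<le> jb a + jb b"
  unfolding jb_def by (simp add: abs_triangle_ineq add_increasing)

lemma jb_cv:
  assumes [measurable]: "F \<in> borel_measurable borel" "R \<in> borel_measurable borel"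
  shows "ennreal (jb (fst z)) * cv F R z \<le> cv (\<lambda>w. ennreal (jb (fst w)) * F w) R z + cv F (\<lambda>w. ennreal (jb (fst w)) * R w) z"
proof -
  have "ennreal (jb (fst z)) * cv F R z = (\<integral>\<^sup>+w. ennreal (jb (fst z)) * (F w * R (z - w)) \<partial>lborel)"
    unfolding cv_def by (rule nn_integral_cmult[symmetric]) measurable
  also have "\<dots> \<le> (\<integral>\<^sup>+w. ennreal (jb (fst w)) * F w * R (z - w) + F w * (ennreal (jb (fst (z - w))) * R (z - w)) \<partial>lborel)"
  proof (rule nn_integral_mono)
    fix w :: pt
    have "jb (fst z) \<le> jb (fst w) + jb (fst (z - w))"
      using jb_add[of "fst w" "fst (z - w)"] by simp
    then have "ennreal (jb (fst z)) \<le> ennreal (jb (fst w)) + ennreal (jb (fst (z - w)))"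
      by (simp add: ennreal_plus[symmetric] del: ennreal_plus)
    then have "ennreal (jb (fst z)) * (F w * R (z - w)) \<le> (ennreal (jb (fst w)) + ennreal (jb (fst (z - w)))) * (F w * R (z - w))"
      by (rule mult_right_mono) simp
    also have "\<dots> = ennreal (jb (fst w)) * F w * R (z - w) + F w * (ennreal (jb (fst (z - w))) * R (z - w))"
      by (simp add: algebra_simps)
    finally show "ennreal (jb (fst z)) * (F w * R (z - w)) \<le> ennreal (jb (fst w)) * F w * R (z - w) + F w * (ennreal (jb (fst (z - w))) * R (z - w))" .
  qed
  also have "\<dots> = cv (\<lambda>w. ennreal (jb (fst w)) * F w) R z + cv F (\<lambda>w. ennreal (jb (fst w)) * R w) z"
    unfolding cv_def by (rule nn_integral_add) measurable
  finally show ?thesis .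
qed

lemma Weak_cv:
  assumes W1: "Weak F B1" and W2: "Weak R B2"
  shows "Weak (cv F R) (4 * B1 * B2)"
proof -
  have [measurable]: "F \<in> borel_measurable borel" "R \<in> borel_measurable borel"
    using W1 W2 by (auto simp: Weak_def)
  have i1: "(\<integral>\<^sup>+z. F z \<partial>lborel)^2 \<le> B1" "(\<integral>\<^sup>+z. ennreal (jb (fst z)) * F z \<partial>lborel)^2 \<le> B1"
    using W1 by (auto simp: Weak_def)
  have i2: "(\<integral>\<^sup>+z. R z \<partial>lborel)^2 \<le> B2" "(\<integral>\<^sup>+z. ennreal (jb (fst z)) * R z \<partial>lborel)^2 \<le> B2"
    using W2 by (auto simp: Weak_def)
  have "(\<integral>\<^sup>+z. cv F R z \<partial>lborel)^2 = (\<integral>\<^sup>+z. F z \<partial>lborel)^2 * (\<integral>\<^sup>+z. R z \<partial>lborel)^2"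
    by (simp add: cv_integral power_mult_distrib)
  also have "\<dots> \<le> B1 * B2" using i1 i2 by (intro mult_mono) auto
  also have "\<dots> \<le> 4 * B1 * B2" using le4[of "B1 * B2"] by (simp add: mult_ac)
  finally have c1: "(\<integral>\<^sup>+z. cv F R z \<partial>lborel)^2 \<le> 4 * B1 * B2" .
  have "(\<integral>\<^sup>+z. ennreal (jb (fst z)) * cv F R z \<partial>lborel)
      \<le> (\<integral>\<^sup>+z. cv (\<lambda>w. ennreal (jb (fst w)) * F w) R z + cv F (\<lambda>w. ennreal (jb (fst w)) * R w) z \<partial>lborel)"
    by (intro nn_integral_mono jb_cv) measurable
  also have "\<dots> = (\<integral>\<^sup>+z. ennreal (jb (fst z)) * F z \<partial>lborel) * (\<integral>\<^sup>+z. R z \<partial>lborel)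
      + (\<integral>\<^sup>+z. F z \<partial>lborel) * (\<integral>\<^sup>+z. ennreal (jb (fst z)) * R z \<partial>lborel)"
    by (subst nn_integral_add) (auto simp: cv_integral)
  finally have "(\<integral>\<^sup>+z. ennreal (jb (fst z)) * cv F R z \<partial>lborel)^2
      \<le> ((\<integral>\<^sup>+z. ennreal (jb (fst z)) * F z \<partial>lborel) * (\<integral>\<^sup>+z. R z \<partial>lborel)
      + (\<integral>\<^sup>+z. F z \<partial>lborel) * (\<integral>\<^sup>+z. ennreal (jb (fst z)) * R z \<partial>lborel))^2"
    by (rule power_mono) simp
  also have "\<dots> \<le> 2 * ((\<integral>\<^sup>+z. ennreal (jb (fst z)) * F z \<partial>lborel) * (\<integral>\<^sup>+z. R z \<partial>lborel))^2
      + 2 * ((\<integral>\<^sup>+z. F z \<partial>lborel) * (\<integral>\<^sup>+z. ennreal (jb (fst z)) * R z \<partial>lborel))^2"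
    by (rule sq_add_le)
  also have "\<dots> \<le> 2 * (B1 * B2) + 2 * (B1 * B2)"
    unfolding power_mult_distrib using i1 i2 by (intro add_mono mult_left_mono mult_mono) auto
  also have "\<dots> = 4 * B1 * B2"
  proof -
    have "2 * (B1 * B2) + 2 * (B1 * B2) = (2 + 2) * (B1 * B2)" by (rule distrib_right[symmetric])
    then show ?thesis by (simp add: mult.assoc)
  qed
  finally have c2: "(\<integral>\<^sup>+z. ennreal (jb (fst z)) * cv F R z \<partial>lborel)^2 \<le> 4 * B1 * B2" .
  show ?thesis unfolding Weak_def using c1 c2 by simp
qed

lemma shift1d:
  fixes g :: "real \<Rightarrow> ennreal"
  assumes [measurable]: "g \<in> borel_measurable borel"
  shows "(\<integral>\<^sup>+x. g (x - c) \<partial>lborel) = (\<integral>\<^sup>+x. g x \<partial>lborel)"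
proof -
  have "(\<integral>\<^sup>+y. g y \<partial>lborel) = ennreal \<bar>1\<bar> * (\<integral>\<^sup>+y. g (- c + 1 * y) \<partial>lborel)"
    by (rule nn_integral_real_affine) auto
  then show ?thesis by simp
qed

lemma Good_cv:
  assumes G1: "Good R B1" and W2: "Weak F B2"
  shows "Good (cv F R) (4 * B1 * B2)" "Good (cv R F) (4 * B1 * B2)"
proof -
  have [measurable]: "F \<in> borel_measurable borel" "R \<in> borel_measurable borel"
    using G1 W2 by (auto simp: Weak_def Good_def)
  have W: "Weak (cv F R) (4 * B1 * B2)"
    using Weak_cv[OF W2 Good_Weak[OF G1]] by (simp add: mult_ac)
  obtain q where [measurable]: "q \<in> borel_measurable borel" and Rq: "\<And>x y. R (x, y) \<le> q y"
    and qi: "(\<integral>\<^sup>+y. q y \<partial>lborel)^2 \<le> B1"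
    using G1 unfolding Good_def by blast
  define q' where "q' y = (\<integral>\<^sup>+w. F w * q (y - snd w) \<partial>lborel)" for y
  have q'm[measurable]: "q' \<in> borel_measurable borel" unfolding q'_def[abs_def] by measurable
  have bnd: "cv F R (x, y) \<le> q' y" for x y
    unfolding cv_def q'_def
  proof (rule nn_integral_mono)
    fix w :: pt
    have "R ((x, y) - w) \<le> q (y - snd w)" using Rq[of "x - fst w" "y - snd w"] by (cases w) simp
    then show "F w * R ((x, y) - w) \<le> F w * q (y - snd w)" by (rule mult_left_mono) simp
  qed
  have "(\<integral>\<^sup>+y. q' y \<partial>lborel) = (\<integral>\<^sup>+w. \<integral>\<^sup>+y. F w * q (y - snd w) \<partial>lborel \<partial>lborel)"
    unfolding q'_def by (rule lborel_pair.Fubini') measurable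
  also have "\<dots> = (\<integral>\<^sup>+w. F w * (\<integral>\<^sup>+y. q y \<partial>lborel) \<partial>lborel)"
  proof (rule nn_integral_cong)
    fix w :: pt
    show "(\<integral>\<^sup>+y. F w * q (y - snd w) \<partial>lborel) = F w * (\<integral>\<^sup>+y. q y \<partial>lborel)"
      by (simp add: nn_integral_cmult shift1d)
  qed
  also have "\<dots> = (\<integral>\<^sup>+w. F w \<partial>lborel) * (\<integral>\<^sup>+y. q y \<partial>lborel)"
    by (rule nn_integral_multc) measurable
  finally have "(\<integral>\<^sup>+y. q' y \<partial>lborel)^2 = (\<integral>\<^sup>+w. F w \<partial>lborel)^2 * (\<integral>\<^sup>+y. q y \<partial>lborel)^2"
    by (simp add: power_mult_distrib)
  also have "\<dots> \<le> B2 * B1" using W2 qi unfolding Weak_def by (intro mult_mono) auto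
  also have "\<dots> \<le> 4 * B1 * B2" using le4[of "B1 * B2"] by (simp add: mult_ac)
  finally have qq: "(\<integral>\<^sup>+y. q' y \<partial>lborel)^2 \<le> 4 * B1 * B2" .
  show "Good (cv F R) (4 * B1 * B2)" unfolding Good_def using W bnd qq q'm by blast
  have e: "cv R F = cv F R" by (rule ext, rule cv_comm) measurable
  show "Good (cv R F) (4 * B1 * B2)" unfolding e unfolding Good_def using W bnd qq q'm by blast
qed


definition K2 :: "real \<Rightarrow> real \<Rightarrow> ennreal" where
  "K2 s b = 4 * (KX s b)^2 + (Ib (2 * b))^2"

lemma X_Good2:
  assumes [measurable]: "F1 \<in> borel_measurable borel" "F2 \<in> borel_measurable borel"
    and b: "b > 1/2" "s \<ge> 3 * b"
  shows "Good (cv F1 F2) (K2 s b * NF s b F1 * NF s b F2)"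
proof -
  have W: "Weak (cv F1 F2) (4 * (KX s b * NF s b F1) * (KX s b * NF s b F2))"
    by (intro Weak_cv X_Weak) measurable
  define q where "q y = (\<integral>\<^sup>+y'. sl F1 y' * sl F2 (y - y') \<partial>lborel)" for y
  have qm[measurable]: "q \<in> borel_measurable borel" unfolding q_def[abs_def] by measurable
  have bnd: "\<forall>x y. cv F1 F2 (x, y) \<le> q y" unfolding q_def using slice by auto
  have "(\<integral>\<^sup>+y. q y \<partial>lborel) = (\<integral>\<^sup>+y. sl F1 y \<partial>lborel) * (\<integral>\<^sup>+y. sl F2 y \<partial>lborel)"
    unfolding q_def by (rule conv1d_int) measurable
  then have "(\<integral>\<^sup>+y. q y \<partial>lborel)^2 = (\<integral>\<^sup>+y. sl F1 y \<partial>lborel)^2 * (\<integral>\<^sup>+y. sl F2 y \<partial>lborel)^2"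
    by (simp add: power_mult_distrib)
  also have "\<dots> \<le> (Ib (2 * b) * NF s b F1) * (Ib (2 * b) * NF s b F2)"
    by (intro mult_mono sl_int b) auto
  finally have qq: "(\<integral>\<^sup>+y. q y \<partial>lborel)^2 \<le> (Ib (2 * b))^2 * NF s b F1 * NF s b F2"
    by (simp add: power2_eq_square mult_ac)
  have w2: "4 * (KX s b * NF s b F1) * (KX s b * NF s b F2) \<le> K2 s b * NF s b F1 * NF s b F2"
  proof -
    have "4 * (KX s b * NF s b F1) * (KX s b * NF s b F2) = (4 * (KX s b)^2) * NF s b F1 * NF s b F2"
      by (simp add: power2_eq_square mult_ac)
    also have "\<dots> \<le> K2 s b * NF s b F1 * NF s b F2"
      unfolding K2_def by (intro mult_right_mono) (auto intro: add_increasing2)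
    finally show ?thesis .
  qed
  have q2: "(Ib (2 * b))^2 * NF s b F1 * NF s b F2 \<le> K2 s b * NF s b F1 * NF s b F2"
    unfolding K2_def by (intro mult_right_mono) (auto intro: add_increasing)
  show ?thesis unfolding Good_def
    using Weak_mono[OF W w2] bnd qm order_trans[OF qq q2] by blast
qed

fun chain :: "(pt \<Rightarrow> ennreal) list \<Rightarrow> pt \<Rightarrow> ennreal" where
  "chain [] = (\<lambda>_. 0)"
| "chain [F] = F"
| "chain (F # G # L) = cv F (chain (G # L))"

definition PN :: "real \<Rightarrow> real \<Rightarrow> (pt \<Rightarrow> ennreal) list \<Rightarrow> ennreal" where
  "PN s b L = prod_list (map (NF s b) L)"

lemma chain_meas:
  assumes "\<forall>F\<in>set L. F \<in> borel_measurable borel"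
  shows "chain L \<in> borel_measurable borel"
  using assms by (induction L rule: chain.induct) auto

lemma Weak_chain:
  assumes "\<forall>F\<in>set (F0 # L). F \<in> borel_measurable borel"
  shows "Weak (chain (F0 # L)) ((4 * KX s b)^(length L) * KX s b * PN s b (F0 # L))"
  using assms
proof (induction L arbitrary: F0)
  case Nil
  then show ?case using X_Weak[of F0 s b] by (simp add: PN_def)
next
  case (Cons G L)
  have m: "F0 \<in> borel_measurable borel" using Cons.prems by simp
  have IH: "Weak (chain (G # L)) ((4 * KX s b)^(length L) * KX s b * PN s b (G # L))"
    using Cons by simp
  have "Weak (cv F0 (chain (G # L))) (4 * (KX s b * NF s b F0) * ((4 * KX s b)^(length L) * KX s b * PN s b (G # L)))"
    by (rule Weak_cv[OF X_Weak[OF m] IH])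
  moreover have "4 * (KX s b * NF s b F0) * ((4 * KX s b)^(length L) * KX s b * PN s b (G # L))
      = (4 * KX s b)^(length (G # L)) * KX s b * PN s b (F0 # G # L)"
    by (simp add: PN_def mult_ac)
  ultimately show ?case by simp
qed

lemma Good_chain:
  assumes "\<forall>F\<in>set (F0 # F1 # L). F \<in> borel_measurable borel" and b: "b > 1/2" "s \<ge> 3 * b"
  shows "Good (chain (F0 # F1 # L)) ((4 * KX s b)^(length L) * K2 s b * PN s b (F0 # F1 # L))"
  using assms(1)
proof (induction L arbitrary: F0 F1)
  case Nil
  then show ?case using X_Good2[of F0 F1 b s] b by (simp add: PN_def mult_ac)
next
  case (Cons G L)
  have m: "F0 \<in> borel_measurable borel" using Cons.prems by simp
  have IH: "Good (chain (F1 # G # L)) ((4 * KX s b)^(length L) * K2 s b * PN s b (F1 # G # L))"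
    using Cons by simp
  have "Good (cv F0 (chain (F1 # G # L))) (4 * ((4 * KX s b)^(length L) * K2 s b * PN s b (F1 # G # L)) * (KX s b * NF s b F0))"
    by (rule Good_cv(1)[OF IH X_Weak[OF m]])
  moreover have "4 * ((4 * KX s b)^(length L) * K2 s b * PN s b (F1 # G # L)) * (KX s b * NF s b F0)
      = (4 * KX s b)^(length (G # L)) * K2 s b * PN s b (F0 # F1 # G # L)"
    by (simp add: PN_def mult_ac)
  ultimately show ?case by simp
qed


definition Ws :: "real \<Rightarrow> (pt \<Rightarrow> ennreal) \<Rightarrow> pt \<Rightarrow> ennreal" where
  "Ws s F z = ennreal (jb (fst z) powr s) * F z"

lemma Ws_meas[measurable]: "F \<in> borel_measurable borel \<Longrightarrow> Ws s F \<in> borel_measurable borel"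
  unfolding Ws_def[abs_def] by measurable

lemma powr_split:
  assumes "s \<ge> 0"
  shows "jb (a + b) powr s \<le> 2 powr s * (jb a powr s + jb b powr s)"
proof -
  have "jb (a + b) \<le> 2 * max (jb a) (jb b)" using jb_add[of a b] by linarith
  then have "jb (a + b) powr s \<le> (2 * max (jb a) (jb b)) powr s"
    using assms by (simp add: powr_mono2)
  also have "\<dots> = 2 powr s * max (jb a) (jb b) powr s"
    by (rule powr_mult)
  also have "max (jb a) (jb b) powr s \<le> jb a powr s + jb b powr s"
    by (cases "jb a \<le> jb b") (auto simp: max_def)
  then have "2 powr s * max (jb a) (jb b) powr s \<le> 2 powr s * (jb a powr s + jb b powr s)"
    by (rule mult_left_mono) simp
  finally show ?thesis .
qed

lemma Ws_cv:
  assumes [measurable]: "F \<in> borel_measurable borel" "G \<in> borel_measurable borel" and s: "s \<ge> 0"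
  shows "Ws s (cv F G) z \<le> ennreal (2 powr s) * (cv (Ws s F) G z + cv F (Ws s G) z)"
proof -
  have "Ws s (cv F G) z = (\<integral>\<^sup>+w. ennreal (jb (fst z) powr s) * (F w * G (z - w)) \<partial>lborel)"
    unfolding Ws_def cv_def by (rule nn_integral_cmult[symmetric]) measurable
  also have "\<dots> \<le> (\<integral>\<^sup>+w. ennreal (2 powr s) * (Ws s F w * G (z - w) + F w * Ws s G (z - w)) \<partial>lborel)"
  proof (rule nn_integral_mono)
    fix w :: pt
    have "jb (fst z) powr s \<le> 2 powr s * (jb (fst w) powr s + jb (fst (z - w)) powr s)"
      using powr_split[OF s, of "fst w" "fst (z - w)"] by simp
    then have "ennreal (jb (fst z) powr s) \<le> ennreal (2 powr s) * (ennreal (jb (fst w) powr s) + ennreal (jb (fst (z - w)) powr s))"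
      by (simp add: ennreal_mult'[symmetric] ennreal_plus[symmetric] del: ennreal_plus)
    then have "ennreal (jb (fst z) powr s) * (F w * G (z - w)) \<le> ennreal (2 powr s) * (ennreal (jb (fst w) powr s) + ennreal (jb (fst (z - w)) powr s)) * (F w * G (z - w))"
      by (rule mult_right_mono) simp
    also have "\<dots> = ennreal (2 powr s) * (Ws s F w * G (z - w) + F w * Ws s G (z - w))"
      unfolding Ws_def by (simp add: algebra_simps)
    finally show "ennreal (jb (fst z) powr s) * (F w * G (z - w)) \<le> ennreal (2 powr s) * (Ws s F w * G (z - w) + F w * Ws s G (z - w))" .
  qed
  also have "\<dots> = ennreal (2 powr s) * (cv (Ws s F) G z + cv F (Ws s G) z)"
    unfolding cv_def by (subst nn_integral_cmult) (auto simp: nn_integral_add)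
  finally show ?thesis .
qed

definition KB :: "real \<Rightarrow> ennreal" where
  "KB b = 8 + 4 * ennreal (8/3) * Ib (2 * b)"

lemma lemB':
  assumes GQ: "Good Q B" and [measurable]: "F \<in> borel_measurable borel" and b: "b > 1/2" and s: "s \<ge> 0"
  shows "(\<integral>\<^sup>+z. (ennreal \<bar>fst z\<bar> * cv Q (Ws s F) z)^2 \<partial>lborel) \<le> KB b * NF s b F * B"
proof -
  have [measurable]: "Q \<in> borel_measurable borel" using GQ by (simp add: Good_def Weak_def)
  obtain q where [measurable]: "q \<in> borel_measurable borel" and Qq: "\<And>x y. Q (x, y) \<le> q y"
    and qi: "(\<integral>\<^sup>+y. q y \<partial>lborel)^2 \<le> B"
    using GQ unfolding Good_def by blast
  have Qi: "(\<integral>\<^sup>+z. Q z \<partial>lborel)^2 \<le> B" and jQ: "(\<integral>\<^sup>+z. ennreal (jb (fst z)) * Q z \<partial>lborel)^2 \<le> B"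
    using GQ by (auto simp: Good_def Weak_def)
  have WsWt: "ennreal (jb (snd z - fst z^3) powr b) * Ws s F z = ennreal (Wt s b z) * F z" for z
    unfolding Ws_def Wt_def by (simp add: ennreal_mult'[symmetric] mult_ac)
  have N1: "(\<integral>\<^sup>+z. (ennreal (jb (snd z - fst z^3) powr b) * Ws s F z)^2 \<partial>lborel) = NF s b F"
    unfolding NF_def WsWt ..
  have N2: "(\<integral>\<^sup>+z. (Ws s F z)^2 \<partial>lborel) \<le> NF s b F"
    unfolding N1[symmetric]
  proof (intro nn_integral_mono power_mono)
    fix z :: pt
    have "1 \<le> jb (snd z - fst z^3) powr b" using b by (simp add: ge_one_powr_ge_zero)
    then have "1 * Ws s F z \<le> ennreal (jb (snd z - fst z^3) powr b) * Ws s F z"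
      by (intro mult_right_mono) auto
    then show "Ws s F z \<le> ennreal (jb (snd z - fst z^3) powr b) * Ws s F z" by simp
  qed simp
  have qQ: "(\<integral>\<^sup>+y. q y \<partial>lborel) * (\<integral>\<^sup>+z. Q z \<partial>lborel) \<le> 2 * B"
  proof -
    have "(\<integral>\<^sup>+y. q y \<partial>lborel) * (\<integral>\<^sup>+z. Q z \<partial>lborel) \<le> (\<integral>\<^sup>+y. q y \<partial>lborel)^2 + (\<integral>\<^sup>+z. Q z \<partial>lborel)^2"
      by (rule prod_le_sq_sum)
    also have "\<dots> \<le> B + B" using qi Qi by (rule add_mono)
    finally show ?thesis by (simp add: mult_2)
  qed
  have "(\<integral>\<^sup>+z. (ennreal \<bar>fst z\<bar> * cv Q (Ws s F) z)^2 \<partial>lborel)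
     \<le> 8 * ((\<integral>\<^sup>+z. (Ws s F z)^2 \<partial>lborel) * (\<integral>\<^sup>+z. ennreal (jb (fst z)) * Q z \<partial>lborel)^2)
       + 2 * (ennreal (8/3) * Ib (2 * b) * (\<integral>\<^sup>+y. q y \<partial>lborel) * ((\<integral>\<^sup>+z. Q z \<partial>lborel) * (\<integral>\<^sup>+z. (ennreal (jb (snd z - fst z^3) powr b) * Ws s F z)^2 \<partial>lborel)))"
    by (rule lemB) (use Qq b in auto)
  also have "\<dots> = 8 * ((\<integral>\<^sup>+z. (Ws s F z)^2 \<partial>lborel) * (\<integral>\<^sup>+z. ennreal (jb (fst z)) * Q z \<partial>lborel)^2)
       + (2 * ennreal (8/3) * Ib (2 * b)) * (((\<integral>\<^sup>+y. q y \<partial>lborel) * (\<integral>\<^sup>+z. Q z \<partial>lborel)) * NF s b F)"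
    unfolding N1 by (simp add: mult_ac)
  also have "\<dots> \<le> 8 * (NF s b F * B) + (2 * ennreal (8/3) * Ib (2 * b)) * ((2 * B) * NF s b F)"
    by (intro add_mono mult_left_mono mult_mono N2 jQ qQ) auto
  also have "\<dots> = KB b * NF s b F * B"
    unfolding KB_def by (simp add: algebra_simps)
  finally show ?thesis .
qed

lemma sum2:
  fixes X A B :: "pt \<Rightarrow> ennreal"
  assumes [measurable]: "A \<in> borel_measurable borel" "B \<in> borel_measurable borel"
    and le: "\<And>z. X z \<le> c * (A z + B z)"
  shows "(\<integral>\<^sup>+z. (ennreal \<bar>fst z\<bar> * X z)^2 \<partial>lborel)
     \<le> 2 * c^2 * (\<integral>\<^sup>+z. (ennreal \<bar>fst z\<bar> * A z)^2 \<partial>lborel) + 2 * c^2 * (\<integral>\<^sup>+z. (ennreal \<bar>fst z\<bar> * B z)^2 \<partial>lborel)"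
proof -
  have "(\<integral>\<^sup>+z. (ennreal \<bar>fst z\<bar> * X z)^2 \<partial>lborel)
     \<le> (\<integral>\<^sup>+z. 2 * c^2 * (ennreal \<bar>fst z\<bar> * A z)^2 + 2 * c^2 * (ennreal \<bar>fst z\<bar> * B z)^2 \<partial>lborel)"
  proof (rule nn_integral_mono)
    fix z :: pt
    have "(ennreal \<bar>fst z\<bar> * X z)^2 \<le> (ennreal \<bar>fst z\<bar> * (c * (A z + B z)))^2"
      by (intro power_mono mult_left_mono le) auto
    also have "\<dots> = c^2 * (ennreal \<bar>fst z\<bar> * A z + ennreal \<bar>fst z\<bar> * B z)^2"
    proof -
      have "ennreal \<bar>fst z\<bar> * (c * (A z + B z)) = c * (ennreal \<bar>fst z\<bar> * A z + ennreal \<bar>fst z\<bar> * B z)"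
        by (simp add: algebra_simps)
      then show ?thesis by (simp only: power_mult_distrib)
    qed
    also have "\<dots> \<le> c^2 * (2 * (ennreal \<bar>fst z\<bar> * A z)^2 + 2 * (ennreal \<bar>fst z\<bar> * B z)^2)"
      by (intro mult_left_mono sq_add_le) simp
    also have "\<dots> = 2 * c^2 * (ennreal \<bar>fst z\<bar> * A z)^2 + 2 * c^2 * (ennreal \<bar>fst z\<bar> * B z)^2"
      by (simp add: algebra_simps)
    finally show "(ennreal \<bar>fst z\<bar> * X z)^2 \<le> 2 * c^2 * (ennreal \<bar>fst z\<bar> * A z)^2 + 2 * c^2 * (ennreal \<bar>fst z\<bar> * B z)^2" .
  qed
  also have "\<dots> = 2 * c^2 * (\<integral>\<^sup>+z. (ennreal \<bar>fst z\<bar> * A z)^2 \<partial>lborel) + 2 * c^2 * (\<integral>\<^sup>+z. (ennreal \<bar>fst z\<bar> * B z)^2 \<partial>lborel)"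
    by (subst nn_integral_add) (auto simp: nn_integral_cmult)
  finally show ?thesis .
qed


lemma cv_swap_mid:
  assumes [measurable]: "R \<in> borel_measurable borel" "A \<in> borel_measurable borel" "X \<in> borel_measurable borel"
  shows "cv R (cv A X) = cv (cv R X) A"
proof
  fix z
  have c1: "cv R A = cv A R" by (rule ext, rule cv_comm) measurable
  have "cv R (cv A X) z = cv (cv R A) X z" by (rule cv_assoc) measurable
  also have "\<dots> = cv (cv A R) X z" by (simp only: c1)
  also have "\<dots> = cv A (cv R X) z" by (rule cv_assoc[symmetric]) measurable
  also have "\<dots> = cv (cv R X) A z" by (rule cv_comm) measurable
  finally show "cv R (cv A X) z = cv (cv R X) A z" .
qed

lemma cv_assoc_fun:
  assumes [measurable]: "R \<in> borel_measurable borel" "A \<in> borel_measurable borel" "X \<in> borel_measurable borel"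
  shows "cv R (cv A X) = cv (cv R A) X"
  by (rule ext, rule cv_assoc) measurable

lemma split_cv:
  assumes [measurable]: "R \<in> borel_measurable borel" "F \<in> borel_measurable borel" "X \<in> borel_measurable borel"
    and s: "s \<ge> 0"
  shows "cv R (Ws s (cv F X)) z \<le> ennreal (2 powr s) * (cv (cv R X) (Ws s F) z + cv (cv R F) (Ws s X) z)"
proof -
  have "cv R (Ws s (cv F X)) z \<le> cv R (\<lambda>w. ennreal (2 powr s) * (cv (Ws s F) X w + cv F (Ws s X) w)) z"
    by (intro cv_mono Ws_cv s) measurable
  also have "\<dots> = ennreal (2 powr s) * (cv R (cv (Ws s F) X) z + cv R (cv F (Ws s X)) z)"
    by (simp add: cv_cmult cv_add)
  also have "cv R (cv (Ws s F) X) = cv (cv R X) (Ws s F)" by (rule cv_swap_mid) measurable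
  also have "cv R (cv F (Ws s X)) = cv (cv R F) (Ws s X)" by (rule cv_assoc_fun) measurable
  finally show ?thesis .
qed

fun cV :: "real \<Rightarrow> real \<Rightarrow> nat \<Rightarrow> ennreal" where
  "cV s b 0 = KB b"
| "cV s b (Suc n) = 2 * (ennreal (2 powr s))^2 * (KB b * (4 * ((4 * KX s b)^n * KX s b)) + cV s b n * (4 * KX s b))"

lemma V_lemma:
  assumes b: "b > 1/2" "s \<ge> 3 * b"
  shows "\<forall>F\<in>set (F0 # L). F \<in> borel_measurable borel \<Longrightarrow> Good R B \<Longrightarrow>
    (\<integral>\<^sup>+z. (ennreal \<bar>fst z\<bar> * cv R (Ws s (chain (F0 # L))) z)^2 \<partial>lborel) \<le> cV s b (length L) * B * PN s b (F0 # L)"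
proof (induction L arbitrary: F0 R B)
  case Nil
  have [measurable]: "F0 \<in> borel_measurable borel" using Nil by simp
  have "(\<integral>\<^sup>+z. (ennreal \<bar>fst z\<bar> * cv R (Ws s F0) z)^2 \<partial>lborel) \<le> KB b * NF s b F0 * B"
    by (rule lemB'[OF Nil(2)]) (use b in auto)
  then show ?case by (simp add: PN_def mult_ac)
next
  case (Cons G L)
  have s0: "s \<ge> 0" using b by simp
  have [measurable]: "F0 \<in> borel_measurable borel" "G \<in> borel_measurable borel"
    using Cons.prems by auto
  have [measurable]: "R \<in> borel_measurable borel" using Cons.prems by (simp add: Good_def Weak_def)
  define X where "X = chain (G # L)"
  have [measurable]: "X \<in> borel_measurable borel" unfolding X_def by (rule chain_meas) (use Cons.prems in auto)
  have WX: "Weak X ((4 * KX s b)^(length L) * KX s b * PN s b (G # L))"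
    unfolding X_def by (rule Weak_chain) (use Cons.prems in auto)
  have G1: "Good (cv R X) (4 * B * ((4 * KX s b)^(length L) * KX s b * PN s b (G # L)))"
    by (rule Good_cv(2)[OF Cons.prems(2) WX])
  have G2: "Good (cv R F0) (4 * B * (KX s b * NF s b F0))"
    by (rule Good_cv(2)[OF Cons.prems(2) X_Weak]) measurable
  have T1: "(\<integral>\<^sup>+z. (ennreal \<bar>fst z\<bar> * cv (cv R X) (Ws s F0) z)^2 \<partial>lborel)
      \<le> KB b * NF s b F0 * (4 * B * ((4 * KX s b)^(length L) * KX s b * PN s b (G # L)))"
    by (rule lemB'[OF G1]) (use b in auto)
  have T2: "(\<integral>\<^sup>+z. (ennreal \<bar>fst z\<bar> * cv (cv R F0) (Ws s X) z)^2 \<partial>lborel)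
      \<le> cV s b (length L) * (4 * B * (KX s b * NF s b F0)) * PN s b (G # L)"
    unfolding X_def by (rule Cons.IH[OF _ G2]) (use Cons.prems in auto)
  have "(\<integral>\<^sup>+z. (ennreal \<bar>fst z\<bar> * cv R (Ws s (chain (F0 # G # L))) z)^2 \<partial>lborel)
     \<le> 2 * (ennreal (2 powr s))^2 * (\<integral>\<^sup>+z. (ennreal \<bar>fst z\<bar> * cv (cv R X) (Ws s F0) z)^2 \<partial>lborel)
      + 2 * (ennreal (2 powr s))^2 * (\<integral>\<^sup>+z. (ennreal \<bar>fst z\<bar> * cv (cv R F0) (Ws s X) z)^2 \<partial>lborel)"
    by (rule sum2) (auto simp: X_def[symmetric] intro!: split_cv s0)
  also have "\<dots> \<le> 2 * (ennreal (2 powr s))^2 * (KB b * NF s b F0 * (4 * B * ((4 * KX s b)^(length L) * KX s b * PN s b (G # L))))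
      + 2 * (ennreal (2 powr s))^2 * (cV s b (length L) * (4 * B * (KX s b * NF s b F0)) * PN s b (G # L))"
    by (intro add_mono mult_left_mono T1 T2) auto
  also have "\<dots> = cV s b (length (G # L)) * B * PN s b (F0 # G # L)"
    by (simp add: PN_def algebra_simps)
  finally show ?case .
qed

definition cT :: "real \<Rightarrow> real \<Rightarrow> nat \<Rightarrow> ennreal" where
  "cT s b n = 2 * (ennreal (2 powr s))^2 * (KB b * ((4 * KX s b)^n * K2 s b))
     + 2 * (ennreal (2 powr s))^2 * (2 * (ennreal (2 powr s))^2 * (KB b * ((4 * KX s b)^n * K2 s b))
     + 2 * (ennreal (2 powr s))^2 * (cV s b n * K2 s b))"

lemma top_lemma:
  assumes b: "b > 1/2" "s \<ge> 3 * b"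
    and m: "\<forall>F\<in>set (F0 # F1 # F2 # L). F \<in> borel_measurable borel"
  shows "(\<integral>\<^sup>+z. (ennreal \<bar>fst z\<bar> * Ws s (chain (F0 # F1 # F2 # L)) z)^2 \<partial>lborel) \<le> cT s b (length L) * PN s b (F0 # F1 # F2 # L)"
proof -
  have s0: "s \<ge> 0" using b by simp
  have [measurable]: "F0 \<in> borel_measurable borel" "F1 \<in> borel_measurable borel" "F2 \<in> borel_measurable borel"
    using m by auto
  define Y where "Y = chain (F2 # L)"
  have [measurable]: "Y \<in> borel_measurable borel" unfolding Y_def by (rule chain_meas) (use m in auto)
  define X where "X = cv F1 Y"
  have [measurable]: "X \<in> borel_measurable borel" unfolding X_def by measurable
  have ch: "chain (F0 # F1 # F2 # L) = cv F0 X" by (simp add: X_def Y_def)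
  have GX: "Good X ((4 * KX s b)^(length L) * K2 s b * PN s b (F1 # F2 # L))"
    using Good_chain[of F1 F2 L b s] m b by (simp add: X_def Y_def)
  have GY0: "Good (cv F0 Y) ((4 * KX s b)^(length L) * K2 s b * PN s b (F0 # F2 # L))"
    using Good_chain[of F0 F2 L b s] m b by (simp add: Y_def)
  have G01: "Good (cv F0 F1) (K2 s b * NF s b F0 * NF s b F1)"
    by (rule X_Good2) (use b in auto)
  let ?c = "ennreal (2 powr s)"
  have p1: "Ws s (cv F0 X) z \<le> ?c * (cv X (Ws s F0) z + cv F0 (Ws s X) z)" for z
  proof -
    have "Ws s (cv F0 X) z \<le> ?c * (cv (Ws s F0) X z + cv F0 (Ws s X) z)" by (rule Ws_cv) (use s0 in auto)
    also have "cv (Ws s F0) X z = cv X (Ws s F0) z" by (rule cv_comm) measurable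
    finally show ?thesis .
  qed
  have S1: "(\<integral>\<^sup>+z. (ennreal \<bar>fst z\<bar> * Ws s (chain (F0 # F1 # F2 # L)) z)^2 \<partial>lborel)
     \<le> 2 * ?c^2 * (\<integral>\<^sup>+z. (ennreal \<bar>fst z\<bar> * cv X (Ws s F0) z)^2 \<partial>lborel)
      + 2 * ?c^2 * (\<integral>\<^sup>+z. (ennreal \<bar>fst z\<bar> * cv F0 (Ws s X) z)^2 \<partial>lborel)"
    unfolding ch by (rule sum2) (auto intro!: p1)
  have A1: "(\<integral>\<^sup>+z. (ennreal \<bar>fst z\<bar> * cv X (Ws s F0) z)^2 \<partial>lborel)
      \<le> KB b * NF s b F0 * ((4 * KX s b)^(length L) * K2 s b * PN s b (F1 # F2 # L))"
    by (rule lemB'[OF GX]) (use b in auto)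
  have p2: "cv F0 (Ws s X) z \<le> ?c * (cv (cv F0 Y) (Ws s F1) z + cv (cv F0 F1) (Ws s Y) z)" for z
    unfolding X_def by (rule split_cv) (use s0 in auto)
  have S2: "(\<integral>\<^sup>+z. (ennreal \<bar>fst z\<bar> * cv F0 (Ws s X) z)^2 \<partial>lborel)
     \<le> 2 * ?c^2 * (\<integral>\<^sup>+z. (ennreal \<bar>fst z\<bar> * cv (cv F0 Y) (Ws s F1) z)^2 \<partial>lborel)
      + 2 * ?c^2 * (\<integral>\<^sup>+z. (ennreal \<bar>fst z\<bar> * cv (cv F0 F1) (Ws s Y) z)^2 \<partial>lborel)"
    by (rule sum2) (auto intro!: p2)
  have A2: "(\<integral>\<^sup>+z. (ennreal \<bar>fst z\<bar> * cv (cv F0 Y) (Ws s F1) z)^2 \<partial>lborel)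
      \<le> KB b * NF s b F1 * ((4 * KX s b)^(length L) * K2 s b * PN s b (F0 # F2 # L))"
    by (rule lemB'[OF GY0]) (use b in auto)
  have A3: "(\<integral>\<^sup>+z. (ennreal \<bar>fst z\<bar> * cv (cv F0 F1) (Ws s Y) z)^2 \<partial>lborel)
      \<le> cV s b (length L) * (K2 s b * NF s b F0 * NF s b F1) * PN s b (F2 # L)"
    unfolding Y_def by (rule V_lemma[OF b _ G01]) (use m in auto)
  have "(\<integral>\<^sup>+z. (ennreal \<bar>fst z\<bar> * Ws s (chain (F0 # F1 # F2 # L)) z)^2 \<partial>lborel)
     \<le> 2 * ?c^2 * (KB b * NF s b F0 * ((4 * KX s b)^(length L) * K2 s b * PN s b (F1 # F2 # L)))
      + 2 * ?c^2 * (2 * ?c^2 * (KB b * NF s b F1 * ((4 * KX s b)^(length L) * K2 s b * PN s b (F0 # F2 # L)))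
      + 2 * ?c^2 * (cV s b (length L) * (K2 s b * NF s b F0 * NF s b F1) * PN s b (F2 # L)))"
    using S1 S2 A1 A2 A3
    by (meson add_mono mult_left_mono order_trans zero_le)
  also have "\<dots> = cT s b (length L) * PN s b (F0 # F1 # F2 # L)"
    unfolding cT_def PN_def by (simp add: algebra_simps)
  finally show ?thesis .
qed


lemma Ib_fin2: "a > 1 \<Longrightarrow> Ib a < \<infinity>" by (rule Ib_lt_top)

lemma cV_fin:
  assumes "KB b < \<infinity>" "KX s b < \<infinity>"
  shows "cV s b n < \<infinity>"
  by (induction n) (use assms in \<open>auto simp: ennreal_mult_less_top power_less_top_ennreal\<close>)

lemma cT_fin:
  assumes b: "b > 1/2" "s \<ge> 3 * b"
  shows "cT s b n < \<infinity>"
proof -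
  have h: "2 * s > 1" "2 * b > 1" "2 * s - 2 > 1" using b by linarith+
  have i1: "Ib (2 * s) < \<infinity>" "Ib (2 * b) < \<infinity>" "Ib (2 * s - 2) < \<infinity>"
    using Ib_lt_top[OF h(1)] Ib_lt_top[OF h(2)] Ib_lt_top[OF h(3)] by auto
  have kx: "KX s b < \<infinity>" unfolding KX_def using i1 by (auto simp: ennreal_mult_less_top)
  have kb: "KB b < \<infinity>" unfolding KB_def using i1 by (auto simp: ennreal_mult_less_top)
  have k2: "K2 s b < \<infinity>" unfolding K2_def using i1 kx by (auto simp: ennreal_mult_less_top power_less_top_ennreal)
  have cv: "cV s b n < \<infinity>" by (rule cV_fin[OF kb kx])
  show ?thesis unfolding cT_def using kx kb k2 cv
    by (auto simp: ennreal_mult_less_top power_less_top_ennreal)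
qed

definition Ab :: "(pt \<Rightarrow> complex) \<Rightarrow> pt \<Rightarrow> ennreal" where
  "Ab f z = ennreal (cmod (f z))"

lemma fconv_bound:
  assumes "\<And>z. ennreal (cmod (g z)) \<le> H z"
  shows "ennreal (cmod (fconv f g z)) \<le> cv (Ab f) H z"
proof -
  have "cmod (fconv f g z) = \<bar>1 / (2 * pi)^2\<bar> * cmod (LINT w|lborel. f w * g (z - w))"
    unfolding fconv_def by (simp only: norm_mult norm_of_real)
  also have "\<dots> \<le> cmod (LINT w|lborel. f w * g (z - w))"
  proof (rule mult_left_le_one_le)
    have "1 \<le> 2 * pi" using pi_gt3 by simp
    then have "1 \<le> (2 * pi)^2" by (rule one_le_power)
    then show "\<bar>1 / (2 * pi)^2\<bar> \<le> 1" by simp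
  qed simp_all
  finally have a: "ennreal (cmod (fconv f g z)) \<le> ennreal (cmod (LINT w|lborel. f w * g (z - w)))"
    by (rule ennreal_leI)
  have b: "ennreal (cmod (LINT w|lborel. f w * g (z - w))) \<le> (\<integral>\<^sup>+w. ennreal (cmod (f w * g (z - w))) \<partial>lborel)"
  proof (cases "integrable lborel (\<lambda>w. f w * g (z - w))")
    case True
    then show ?thesis by (rule integral_norm_bound_ennreal)
  next
    case False
    then show ?thesis by (simp add: not_integrable_integral_eq)
  qed
  have c: "(\<integral>\<^sup>+w. ennreal (cmod (f w * g (z - w))) \<partial>lborel) \<le> cv (Ab f) H z"
    unfolding cv_def Ab_def
  proof (rule nn_integral_mono)
    fix w :: pt
    have "ennreal (cmod (f w * g (z - w))) = ennreal (cmod (f w)) * ennreal (cmod (g (z - w)))"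
      by (simp add: norm_mult ennreal_mult)
    also have "\<dots> \<le> ennreal (cmod (f w)) * H (z - w)"
      by (rule mult_left_mono[OF assms]) simp
    finally show "ennreal (cmod (f w * g (z - w))) \<le> ennreal (cmod (f w)) * H (z - w)" .
  qed
  show ?thesis using a b c by (meson order_trans)
qed

lemma fprod_bound: "L \<noteq> [] \<Longrightarrow> ennreal (cmod (fprod L z)) \<le> chain (map Ab L) z"
proof (induction L arbitrary: z rule: fprod.induct)
  case (2 f)
  then show ?case by (simp add: Ab_def)
next
  case (3 f v va)
  have "ennreal (cmod (fconv f (fprod (v # va)) z)) \<le> cv (Ab f) (chain (map Ab (v # va))) z"
    by (rule fconv_bound) (use 3 in auto)
  then show ?case by simp
qed simp

definition Ew :: "real \<Rightarrow> pt \<Rightarrow> ennreal" where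
  "Ew \<rho> z = ennreal (exp (\<rho> * (1 + \<bar>fst z\<bar>)))"

lemma Ew_meas[measurable]: "Ew \<rho> \<in> borel_measurable borel"
  unfolding Ew_def[abs_def] by measurable

lemma Ew_sub:
  assumes "\<rho> \<ge> 0"
  shows "Ew \<rho> (w + u) \<le> Ew \<rho> w * Ew \<rho> u"
proof -
  have "\<rho> * (1 + \<bar>fst (w + u)\<bar>) \<le> \<rho> * (1 + \<bar>fst w\<bar>) + \<rho> * (1 + \<bar>fst u\<bar>)"
  proof -
    have "1 + \<bar>fst (w + u)\<bar> \<le> (1 + \<bar>fst w\<bar>) + (1 + \<bar>fst u\<bar>)"
      using abs_triangle_ineq[of "fst w" "fst u"] by simp
    then have "\<rho> * (1 + \<bar>fst (w + u)\<bar>) \<le> \<rho> * ((1 + \<bar>fst w\<bar>) + (1 + \<bar>fst u\<bar>))"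
      using assms by (rule mult_left_mono)
    then show ?thesis by (simp add: distrib_left)
  qed
  then have "exp (\<rho> * (1 + \<bar>fst (w + u)\<bar>)) \<le> exp (\<rho> * (1 + \<bar>fst w\<bar>)) * exp (\<rho> * (1 + \<bar>fst u\<bar>))"
    by (simp add: exp_add[symmetric])
  then show ?thesis unfolding Ew_def by (simp add: ennreal_mult[symmetric])
qed

lemma Ew_cv:
  assumes "\<rho> \<ge> 0" and [measurable]: "F \<in> borel_measurable borel" "G \<in> borel_measurable borel"
  shows "Ew \<rho> z * cv F G z \<le> cv (\<lambda>w. Ew \<rho> w * F w) (\<lambda>w. Ew \<rho> w * G w) z"
proof -
  have "Ew \<rho> z * cv F G z = (\<integral>\<^sup>+w. Ew \<rho> z * (F w * G (z - w)) \<partial>lborel)"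
    unfolding cv_def by (rule nn_integral_cmult[symmetric]) measurable
  also have "\<dots> \<le> cv (\<lambda>w. Ew \<rho> w * F w) (\<lambda>w. Ew \<rho> w * G w) z"
    unfolding cv_def
  proof (rule nn_integral_mono)
    fix w :: pt
    have "Ew \<rho> z \<le> Ew \<rho> w * Ew \<rho> (z - w)" using Ew_sub[OF assms(1), of w "z - w"] by simp
    then have "Ew \<rho> z * (F w * G (z - w)) \<le> Ew \<rho> w * Ew \<rho> (z - w) * (F w * G (z - w))"
      by (rule mult_right_mono) simp
    then show "Ew \<rho> z * (F w * G (z - w)) \<le> Ew \<rho> w * F w * (Ew \<rho> (z - w) * G (z - w))"
      by (simp add: mult_ac)
  qed
  finally show ?thesis .
qed

lemma Ew_chain:
  assumes "\<rho> \<ge> 0"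
  shows "\<forall>F\<in>set L. F \<in> borel_measurable borel \<Longrightarrow> Ew \<rho> z * chain L z \<le> chain (map (\<lambda>F w. Ew \<rho> w * F w) L) z"
proof (induction L arbitrary: z rule: chain.induct)
  case (3 F G L)
  have [measurable]: "F \<in> borel_measurable borel" "chain (G # L) \<in> borel_measurable borel"
    using 3 by (auto intro!: chain_meas)
  have "Ew \<rho> z * chain (F # G # L) z = Ew \<rho> z * cv F (chain (G # L)) z" by simp
  also have "\<dots> \<le> cv (\<lambda>w. Ew \<rho> w * F w) (\<lambda>w. Ew \<rho> w * chain (G # L) w) z"
    by (rule Ew_cv[OF assms]) measurable
  also have "\<dots> \<le> cv (\<lambda>w. Ew \<rho> w * F w) (chain (map (\<lambda>F w. Ew \<rho> w * F w) (G # L))) z"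
    by (rule cv_mono) (use 3 in auto)
  finally show ?case by simp
qed auto


lemma ennsqrt_prod_list: "ennsqrt (prod_list xs) = prod_list (map ennsqrt xs)"
proof (induction xs)
  case Nil
  have "ennsqrt 1 = ennsqrt (1^2)" by simp
  then show ?case by (simp only: ennsqrt_of_sq) simp
next
  case (Cons a xs)
  then show ?case by (simp add: ennsqrt_mult)
qed

lemma Ab_meas[measurable]: "f \<in> borel_measurable borel \<Longrightarrow> Ab f \<in> borel_measurable borel"
  unfolding Ab_def[abs_def] by measurable

lemma NF_Xnorm:
  fixes f :: "pt \<Rightarrow> complex"
  shows "ennsqrt (NF s b (\<lambda>w. Ew \<rho> w * Ab f w)) = Xnorm \<rho> s b f"
proof -
  have "(ennreal (Wt s b z) * (Ew \<rho> z * Ab f z))^2 = ennreal ((bweight \<rho> s b z * cmod (f z))^2)" for z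
  proof -
    have e: "bweight \<rho> s b z * cmod (f z) = Wt s b z * (exp (\<rho> * (1 + \<bar>fst z\<bar>)) * cmod (f z))"
      unfolding bweight_def Wt_def jb_def by (simp add: mult_ac)
    have "ennreal (Wt s b z) * (Ew \<rho> z * Ab f z) = ennreal (bweight \<rho> s b z * cmod (f z))"
      unfolding e Ew_def Ab_def by (simp add: ennreal_mult)
    moreover have nn: "0 \<le> bweight \<rho> s b z * cmod (f z)" by (simp add: bweight_def)
    ultimately show ?thesis using ennreal_power[OF nn, of 2] by simp
  qed
  then show ?thesis unfolding NF_def Xnorm_def by simp
qed

lemma main_bound:
  fixes \<rho> s b b' :: real and Lc :: "(pt \<Rightarrow> complex) list"
  assumes \<rho>: "\<rho> \<ge> 0" and b: "b > 1/2" "s \<ge> 3 * b" and b': "b' \<le> 0"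
    and len: "length Lc \<ge> 3" and m: "\<forall>f\<in>set Lc. f \<in> borel_measurable borel"
  shows "Xnorm \<rho> s b' (dx_hat (fprod Lc)) \<le> ennsqrt (cT s b (length Lc - 3)) * prod_list (map (Xnorm \<rho> s b) Lc)"
proof -
  have "\<exists>f0 f1 f2 L. Lc = f0 # f1 # f2 # L"
    using len by (auto simp: numeral_3_eq_3 Suc_le_length_iff)
  then obtain f0 f1 f2 L where Lc: "Lc = f0 # f1 # f2 # L" by blast
  define Fs where "Fs = map (\<lambda>f w. Ew \<rho> w * Ab f w) Lc"
  have Fs_eq: "Fs = map (\<lambda>F w. Ew \<rho> w * F w) (map Ab Lc)" unfolding Fs_def by simp
  have mAb: "\<forall>F\<in>set (map Ab Lc). F \<in> borel_measurable borel" using m by auto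
  have mFs: "\<forall>F\<in>set Fs. F \<in> borel_measurable borel" unfolding Fs_def using m by auto
  have Lc0: "Lc \<noteq> []" using Lc by simp
  have pw: "ennreal ((bweight \<rho> s b' z * cmod (dx_hat (fprod Lc) z))^2) \<le> (ennreal \<bar>fst z\<bar> * Ws s (chain Fs) z)^2" for z
  proof -
    have d: "cmod (dx_hat (fprod Lc) z) = \<bar>fst z\<bar> * cmod (fprod Lc z)"
      unfolding dx_hat_def by (simp add: norm_mult)
    have m1: "(1 + \<bar>snd z - fst z ^ 3\<bar>) powr b' \<le> 1"
    proof -
      have "1 \<le> (1 + \<bar>snd z - fst z ^ 3\<bar>) powr (- b')" by (rule ge_one_powr_ge_zero) (use b' in auto)
      moreover have "(1 + \<bar>snd z - fst z ^ 3\<bar>) powr b' = inverse ((1 + \<bar>snd z - fst z ^ 3\<bar>) powr (- b'))"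
        using powr_minus[of "1 + \<bar>snd z - fst z ^ 3\<bar>" "- b'"] by simp
      ultimately show ?thesis by (simp add: inverse_le_1_iff)
    qed
    define x where "x = bweight \<rho> s b' z * cmod (dx_hat (fprod Lc) z)"
    define y where "y = exp (\<rho> * (1 + \<bar>fst z\<bar>)) * jb (fst z) powr s * (\<bar>fst z\<bar> * cmod (fprod Lc z))"
    have x0: "0 \<le> x" unfolding x_def bweight_def by simp
    have xy: "x \<le> y"
    proof -
      have "x = (exp (\<rho> * (1 + \<bar>fst z\<bar>)) * jb (fst z) powr s) * (1 + \<bar>snd z - fst z ^ 3\<bar>) powr b' * (\<bar>fst z\<bar> * cmod (fprod Lc z))"
        unfolding x_def bweight_def d jb_def by simp
      also have "\<dots> \<le> (exp (\<rho> * (1 + \<bar>fst z\<bar>)) * jb (fst z) powr s) * 1 * (\<bar>fst z\<bar> * cmod (fprod Lc z))"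
        by (intro mult_right_mono mult_left_mono m1) auto
      finally show ?thesis unfolding y_def by simp
    qed
    have "ennreal y = ennreal \<bar>fst z\<bar> * (ennreal (jb (fst z) powr s) * (Ew \<rho> z * ennreal (cmod (fprod Lc z))))"
      unfolding y_def Ew_def by (simp add: ennreal_mult mult_ac)
    also have "\<dots> \<le> ennreal \<bar>fst z\<bar> * (ennreal (jb (fst z) powr s) * (Ew \<rho> z * chain (map Ab Lc) z))"
      by (intro mult_left_mono fprod_bound Lc0) auto
    also have "\<dots> \<le> ennreal \<bar>fst z\<bar> * (ennreal (jb (fst z) powr s) * chain Fs z)"
      unfolding Fs_eq by (intro mult_left_mono Ew_chain \<rho> mAb) auto
    also have "\<dots> = ennreal \<bar>fst z\<bar> * Ws s (chain Fs) z" unfolding Ws_def ..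
    finally have "ennreal x \<le> ennreal \<bar>fst z\<bar> * Ws s (chain Fs) z"
      using ennreal_leI[OF xy] by (rule order_trans[rotated])
    then have "(ennreal x)^2 \<le> (ennreal \<bar>fst z\<bar> * Ws s (chain Fs) z)^2" by (rule power_mono) simp
    then show ?thesis unfolding x_def[symmetric] using x0 by (simp add: ennreal_power)
  qed
  have "Xnorm \<rho> s b' (dx_hat (fprod Lc)) \<le> ennsqrt (\<integral>\<^sup>+z. (ennreal \<bar>fst z\<bar> * Ws s (chain Fs) z)^2 \<partial>lborel)"
    unfolding Xnorm_def by (intro ennsqrt_mono nn_integral_mono pw)
  also have "(\<integral>\<^sup>+z. (ennreal \<bar>fst z\<bar> * Ws s (chain Fs) z)^2 \<partial>lborel) \<le> cT s b (length L) * PN s b Fs"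
  proof -
    have "Fs = (\<lambda>w. Ew \<rho> w * Ab f0 w) # (\<lambda>w. Ew \<rho> w * Ab f1 w) # (\<lambda>w. Ew \<rho> w * Ab f2 w) # map (\<lambda>f w. Ew \<rho> w * Ab f w) L"
      unfolding Fs_def Lc by simp
    moreover have "length L = length (map (\<lambda>f w. Ew \<rho> w * Ab f w) L)" by simp
    ultimately show ?thesis using top_lemma[OF b, of "\<lambda>w. Ew \<rho> w * Ab f0 w" "\<lambda>w. Ew \<rho> w * Ab f1 w" "\<lambda>w. Ew \<rho> w * Ab f2 w" "map (\<lambda>f w. Ew \<rho> w * Ab f w) L"] mFs
      by simp
  qed
  then have "ennsqrt (\<integral>\<^sup>+z. (ennreal \<bar>fst z\<bar> * Ws s (chain Fs) z)^2 \<partial>lborel) \<le> ennsqrt (cT s b (length L) * PN s b Fs)"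
    by (rule ennsqrt_mono)
  also have "\<dots> = ennsqrt (cT s b (length L)) * prod_list (map (Xnorm \<rho> s b) Lc)"
    unfolding ennsqrt_mult PN_def ennsqrt_prod_list Fs_def by (simp add: NF_Xnorm comp_def)
  also have "length L = length Lc - 3" using Lc by simp
  finally show ?thesis .
qed

lemma prod_list_range:
  "prod_list (map g (map h [1..<n + 1])) = (\<Prod>i\<in>{1..n}. g (h i))"
proof -
  have "prod_list (map g (map h [1..<n + 1])) = prod_list (map (\<lambda>i. g (h i)) [1..<n + 1])"
    by (simp add: comp_def)
  also have "\<dots> = prod (\<lambda>i. g (h i)) (set [1..<n + 1])"
    by (rule prod.distinct_set_conv_list[symmetric]) simp
  also have "set [1..<n + 1] = {1..n}" by auto
  finally show ?thesis .
qed

theorem lemma3p6: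
  fixes \<rho> s b b' :: real and p :: nat
  assumes "\<rho> > 0" and "b > 1/2" and "b' < - 1/4" and "s \<ge> 3 * b" and "p \<ge> 1"
  shows "\<exists>C c :: real. \<forall>uh vh :: nat \<Rightarrow> real \<times> real \<Rightarrow> complex.
     (\<forall>i\<in>{1..p+1}. inX \<rho> s b (uh i)) \<and> (\<forall>j\<in>{1..p+1}. inX \<rho> s b (vh j)) \<longrightarrow>
       Xnorm \<rho> s b' (dx_hat (fprod (map uh [1..<p+1] @ map vh [1..<p+2])))
         \<le> ennreal C * (\<Prod>i\<in>{1..p}. Xnorm 0 s b (uh i)) * (\<Prod>j\<in>{1..p+1}. Xnorm 0 s b (vh j))
           + ennreal c * (\<Prod>i\<in>{1..p}. Xnorm \<rho> s b (uh i)) * (\<Prod>j\<in>{1..p+1}. Xnorm \<rho> s b (vh j))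
     \<and> Xnorm \<rho> s b' (dx_hat (fprod (map uh [1..<p+2] @ map vh [1..<p+1])))
         \<le> ennreal C * (\<Prod>i\<in>{1..p+1}. Xnorm 0 s b (uh i)) * (\<Prod>j\<in>{1..p}. Xnorm 0 s b (vh j))
           + ennreal c * (\<Prod>i\<in>{1..p+1}. Xnorm \<rho> s b (uh i)) * (\<Prod>j\<in>{1..p}. Xnorm \<rho> s b (vh j))"
proof -
  have \<rho>: "\<rho> \<ge> 0" using assms by simp
  have b: "b > 1/2" "s \<ge> 3 * b" using assms by auto
  have b': "b' \<le> 0" using assms by simp
  define K where "K = ennsqrt (cT s b (2 * p - 2))"
  have Kfin: "K < \<infinity>"
  proof -
    have "cT s b (2 * p - 2) < \<infinity>" by (rule cT_fin[OF b])
    then show ?thesis unfolding K_def ennsqrt_def by simp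
  qed
  define c where "c = enn2real K"
  have Kc: "ennreal c = K" unfolding c_def using Kfin by simp
  show ?thesis
  proof (intro exI allI impI)
    fix uh vh :: "nat \<Rightarrow> real \<times> real \<Rightarrow> complex"
    assume h: "(\<forall>i\<in>{1..p+1}. inX \<rho> s b (uh i)) \<and> (\<forall>j\<in>{1..p+1}. inX \<rho> s b (vh j))"
    have mu: "uh i \<in> borel_measurable borel" if "i \<in> {1..p+1}" for i
      using h that unfolding inX_def by auto
    have mv: "vh i \<in> borel_measurable borel" if "i \<in> {1..p+1}" for i
      using h that unfolding inX_def by auto
    define L1 where "L1 = map uh [1..<p+1] @ map vh [1..<p+2]"
    define L2 where "L2 = map uh [1..<p+2] @ map vh [1..<p+1]"
    have len1: "length L1 = 2 * p + 1" unfolding L1_def by simp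
    have len2: "length L2 = 2 * p + 1" unfolding L2_def by simp
    have m1: "\<forall>f\<in>set L1. f \<in> borel_measurable borel" unfolding L1_def using mu mv by auto
    have m2: "\<forall>f\<in>set L2. f \<in> borel_measurable borel" unfolding L2_def using mu mv by auto
    have e3: "2 * p + 1 - 3 = 2 * p - 2" by simp
    have B1: "Xnorm \<rho> s b' (dx_hat (fprod L1)) \<le> K * prod_list (map (Xnorm \<rho> s b) L1)"
      using main_bound[OF \<rho> b b' _ m1] len1 assms(5) unfolding K_def e3 by simp
    have B2: "Xnorm \<rho> s b' (dx_hat (fprod L2)) \<le> K * prod_list (map (Xnorm \<rho> s b) L2)"
      using main_bound[OF \<rho> b b' _ m2] len2 assms(5) unfolding K_def e3 by simp
    have P1: "prod_list (map (Xnorm \<rho> s b) L1) = (\<Prod>i\<in>{1..p}. Xnorm \<rho> s b (uh i)) * (\<Prod>j\<in>{1..p+1}. Xnorm \<rho> s b (vh j))"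
    proof -
      have e: "p + 2 = (p + 1) + 1" by simp
      show ?thesis unfolding L1_def e map_append prod_list.append prod_list_range ..
    qed
    have P2: "prod_list (map (Xnorm \<rho> s b) L2) = (\<Prod>i\<in>{1..p+1}. Xnorm \<rho> s b (uh i)) * (\<Prod>j\<in>{1..p}. Xnorm \<rho> s b (vh j))"
    proof -
      have e: "p + 2 = (p + 1) + 1" by simp
      show ?thesis unfolding L2_def e map_append prod_list.append prod_list_range ..
    qed
    show "Xnorm \<rho> s b' (dx_hat (fprod (map uh [1..<p+1] @ map vh [1..<p+2])))
         \<le> ennreal 0 * (\<Prod>i\<in>{1..p}. Xnorm 0 s b (uh i)) * (\<Prod>j\<in>{1..p+1}. Xnorm 0 s b (vh j))
           + ennreal c * (\<Prod>i\<in>{1..p}. Xnorm \<rho> s b (uh i)) * (\<Prod>j\<in>{1..p+1}. Xnorm \<rho> s b (vh j))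
     \<and> Xnorm \<rho> s b' (dx_hat (fprod (map uh [1..<p+2] @ map vh [1..<p+1])))
         \<le> ennreal 0 * (\<Prod>i\<in>{1..p+1}. Xnorm 0 s b (uh i)) * (\<Prod>j\<in>{1..p}. Xnorm 0 s b (vh j))
           + ennreal c * (\<Prod>i\<in>{1..p+1}. Xnorm \<rho> s b (uh i)) * (\<Prod>j\<in>{1..p}. Xnorm \<rho> s b (vh j))"
      using B1 B2 unfolding L1_def[symmetric] L2_def[symmetric] P1 P2 Kc[symmetric]
      by (simp add: mult.assoc)
  qed
qed


end
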